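(* Let $H$ be a Hopf algebra over $\mathbb C$ with comultiplication $\Delta$, counit $\epsilon$ and antipode $S$, and let $G$ be a finite subgroup of the group $G(H)$ of group-like elements of $H$ contained in the center of $H$. Let $\omega$ be a normalized $3$-cocycle on $G$ with values in $\mathbb C^\times$ and $j\colon G\to\hat G$ a group isomorphism. Then $H_{(G,\omega,j)}=(H,\Delta,\epsilon,\phi,\alpha,\beta,S)$ with $$\phi=\sum_{x,y,z\in G}\omega(x,y,z)^{-1}e_x\otimes e_y\otimes e_z,\qquad \alpha=1,\qquad\beta=\sum_{x\in G}\omega(x,x^{-1},x)e_x$$ is a quasi-Hopf algebra. Moreover, if $\omega'$ is a normalized $3$-cocycle cohomologous to $\omega$, then $H_{(G,\omega,j)}$ and $H_{(G,\omega',j)}$ are gauge equivalent quasi-Hopf algebras.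
   Context: $\hat G$ is the group of linear characters $G\to\mathbb C^\times$. For $x\in G$, $e_x=\frac{1}{|G|}\sum_{y\in G}j(y)(x)^{-1}y\in\mathbb C[G]\subseteq H$. A quasi-Hopf algebra is $(H,\Delta,\epsilon,\phi,\alpha,\beta,S)$ with $\Delta,\epsilon$ algebra maps, $\phi$ invertible satisfying the pentagon identity and $(\mathrm{id}\otimes\epsilon\otimes\mathrm{id})(\phi)=1\otimes1$, counit axioms, $\phi(\Delta\otimes\mathrm{id})\Delta(h)=(\mathrm{id}\otimes\Delta)\Delta(h)\phi$, $S$ an anti-algebra automorphism, $S(h_{(1)})\alpha h_{(2)}=\epsilon(h)\alpha$, $h_{(1)}\beta S(h_{(2)})=\epsilon(h)\beta$, $\phi^{(1)}\beta S(\phi^{(2)})\alpha\phi^{(3)}=1$, $S(\phi^{(-1)})\alpha\phi^{(-2)}\beta S(\phi^{(-3)})=1$. Gauge equivalence: $A$ and $B$ are gauge equivalent if $A\cong B^F$ as quasi-bialgebras for some gauge transformation $F$ on $B$ (invertible $F\in B\otimes B$ with $(\epsilon\otimes\mathrm{id})(F)=1=(\mathrm{id}\otimes\epsilon)(F)$, $\Delta^F=F\Delta F^{-1}$, $\phi^F=(1\otimes F)(\mathrm{id}\otimes\Delta)(F)\phi(\Delta\otimes\mathrm{id})(F^{-1})(F^{-1}\otimes1)$). A $3$-cocycle is normalized if it equals $1$ whenever an argument is $1$.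
   Formalization: The Hopf algebra H is additionally assumed to have a bijective antipode S. The statement above fails without it. *)

theory Defs
  imports Complex_Main
begin

text \<open>A complex vector space is modelled by a chosen basis (a type 'x): vectors are
finitely supported functions 'x => complex.  Tensor products of such spaces are
modelled on product bases; multilinear maps are given on basis elements and
extended linearly.  Triple tensors use the basis 'x * ('x * 'x).\<close>

type_synonym 'x vec = "'x \<Rightarrow> complex"

definition supp :: "'x vec \<Rightarrow> 'x set" where
  "supp v = {x. v x \<noteq> 0}"

definition fsupp :: "'x vec \<Rightarrow> bool" where
  "fsupp v \<longleftrightarrow> finite (supp v)"

definition basis :: "'x \<Rightarrow> 'x vec" where
  "basis x = (\<lambda>y. if y = x then 1 else 0)"

definition scal :: "complex \<Rightarrow> 'x vec \<Rightarrow> 'x vec" where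
  "scal c v = (\<lambda>y. c * v y)"

definition lin :: "('x \<Rightarrow> 'y vec) \<Rightarrow> 'x vec \<Rightarrow> 'y vec" where
  "lin T v = (\<lambda>y. \<Sum>x\<in>supp v. v x * T x y)"

definition linf :: "('x \<Rightarrow> complex) \<Rightarrow> 'x vec \<Rightarrow> complex" where
  "linf f v = (\<Sum>x\<in>supp v. v x * f x)"

definition bil :: "('x \<Rightarrow> 'y \<Rightarrow> 'z vec) \<Rightarrow> 'x vec \<Rightarrow> 'y vec \<Rightarrow> 'z vec" where
  "bil B v w = (\<lambda>z. \<Sum>x\<in>supp v. \<Sum>y\<in>supp w. v x * w y * B x y z)"

definition tens :: "'x vec \<Rightarrow> 'y vec \<Rightarrow> ('x \<times> 'y) vec" where
  "tens v w = (\<lambda>(x, y). v x * w y)"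

definition maptens :: "('a \<Rightarrow> 'c vec) \<Rightarrow> ('b \<Rightarrow> 'd vec) \<Rightarrow> ('a \<times> 'b) \<Rightarrow> ('c \<times> 'd) vec" where
  "maptens T1 T2 = (\<lambda>(a, b). tens (T1 a) (T2 b))"

definition tmult :: "('a \<Rightarrow> 'a \<Rightarrow> 'a vec) \<Rightarrow> ('b \<Rightarrow> 'b \<Rightarrow> 'b vec)
    \<Rightarrow> ('a \<times> 'b) \<Rightarrow> ('a \<times> 'b) \<Rightarrow> ('a \<times> 'b) vec" where
  "tmult M N = (\<lambda>(x1, x2) (y1, y2). tens (M x1 y1) (N x2 y2))"

abbreviation M2 where "M2 M \<equiv> tmult M M"
abbreviation M3 where "M3 M \<equiv> tmult M (tmult M M)"
abbreviation M4 where "M4 M \<equiv> tmult M (tmult M (tmult M M))"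

definition lin_bij :: "('x \<Rightarrow> 'x vec) \<Rightarrow> bool" where
  "lin_bij T \<longleftrightarrow> (\<forall>x. fsupp (T x)) \<and> bij_betw (lin T) {v. fsupp v} {v. fsupp v}"

definition is_algebra :: "('x \<Rightarrow> 'x \<Rightarrow> 'x vec) \<Rightarrow> 'x vec \<Rightarrow> bool" where
  "is_algebra M u \<longleftrightarrow> (\<forall>x y. fsupp (M x y)) \<and> fsupp u
     \<and> (\<forall>x y z. bil M (M x y) (basis z) = bil M (basis x) (M y z))
     \<and> (\<forall>x. bil M u (basis x) = basis x \<and> bil M (basis x) u = basis x)"

definition D_id :: "('x \<Rightarrow> ('x \<times> 'x) vec) \<Rightarrow> ('x \<times> 'x) \<Rightarrow> ('x \<times> 'x \<times> 'x) vec" where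
  "D_id D = (\<lambda>(a, b) (p, q, r). if r = b then D a (p, q) else 0)"

definition id_D :: "('x \<Rightarrow> ('x \<times> 'x) vec) \<Rightarrow> ('x \<times> 'x) \<Rightarrow> ('x \<times> 'x \<times> 'x) vec" where
  "id_D D = (\<lambda>(a, b) (p, q, r). if p = a then D b (q, r) else 0)"

definition idDid :: "('x \<Rightarrow> ('x \<times> 'x) vec) \<Rightarrow> ('x \<times> 'x \<times> 'x) \<Rightarrow> ('x \<times> 'x \<times> 'x \<times> 'x) vec" where
  "idDid D = (\<lambda>(a, b, c) (p, q, r, s). if p = a \<and> s = c then D b (q, r) else 0)"

definition iidD :: "('x \<Rightarrow> ('x \<times> 'x) vec) \<Rightarrow> ('x \<times> 'x \<times> 'x) \<Rightarrow> ('x \<times> 'x \<times> 'x \<times> 'x) vec" where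
  "iidD D = (\<lambda>(a, b, c) (p, q, r, s). if p = a \<and> q = b then D c (r, s) else 0)"

definition Diid :: "('x \<Rightarrow> ('x \<times> 'x) vec) \<Rightarrow> ('x \<times> 'x \<times> 'x) \<Rightarrow> ('x \<times> 'x \<times> 'x \<times> 'x) vec" where
  "Diid D = (\<lambda>(a, b, c) (p, q, r, s). if r = b \<and> s = c then D a (p, q) else 0)"

text \<open>Quasi-bialgebra data without (quasi-)coassociativity: H an algebra,
Delta and epsilon algebra maps, counit axioms.\<close>
definition is_qb_base :: "('x \<Rightarrow> 'x \<Rightarrow> 'x vec) \<Rightarrow> 'x vec \<Rightarrow> ('x \<Rightarrow> ('x \<times> 'x) vec)
    \<Rightarrow> ('x \<Rightarrow> complex) \<Rightarrow> bool" where
  "is_qb_base M u D e \<longleftrightarrow> is_algebra M u \<and> (\<forall>x. fsupp (D x))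
     \<and> (\<forall>x y. lin D (M x y) = bil (M2 M) (D x) (D y)) \<and> lin D u = tens u u
     \<and> (\<forall>x y. linf e (M x y) = e x * e y) \<and> linf e u = 1
     \<and> (\<forall>x. lin (\<lambda>(a, b). scal (e a) (basis b)) (D x) = basis x)
     \<and> (\<forall>x. lin (\<lambda>(a, b). scal (e b) (basis a)) (D x) = basis x)"

definition is_hopf :: "('x \<Rightarrow> 'x \<Rightarrow> 'x vec) \<Rightarrow> 'x vec \<Rightarrow> ('x \<Rightarrow> ('x \<times> 'x) vec)
    \<Rightarrow> ('x \<Rightarrow> complex) \<Rightarrow> ('x \<Rightarrow> 'x vec) \<Rightarrow> bool" where
  "is_hopf M u D e S \<longleftrightarrow> is_qb_base M u D e
     \<and> (\<forall>x. lin (D_id D) (D x) = lin (id_D D) (D x))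
     \<and> (\<forall>x. fsupp (S x))
     \<and> (\<forall>x. lin (\<lambda>(a, b). bil M (S a) (basis b)) (D x) = scal (e x) u)
     \<and> (\<forall>x. lin (\<lambda>(a, b). bil M (basis a) (S b)) (D x) = scal (e x) u)"

definition grouplike :: "('x \<Rightarrow> ('x \<times> 'x) vec) \<Rightarrow> 'x vec \<Rightarrow> bool" where
  "grouplike D g \<longleftrightarrow> fsupp g \<and> g \<noteq> (\<lambda>_. 0) \<and> lin D g = tens g g"

definition finite_central_subgroup :: "('x \<Rightarrow> 'x \<Rightarrow> 'x vec) \<Rightarrow> 'x vec
    \<Rightarrow> ('x \<Rightarrow> ('x \<times> 'x) vec) \<Rightarrow> 'x vec set \<Rightarrow> bool" where
  "finite_central_subgroup M u D G \<longleftrightarrow> finite G \<and> (\<forall>g\<in>G. grouplike D g) \<and> u \<in> G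
     \<and> (\<forall>g\<in>G. \<forall>h\<in>G. bil M g h \<in> G) \<and> (\<forall>g\<in>G. \<exists>h\<in>G. bil M g h = u)
     \<and> (\<forall>g\<in>G. \<forall>x. bil M g (basis x) = bil M (basis x) g)"

definition ginv :: "('x \<Rightarrow> 'x \<Rightarrow> 'x vec) \<Rightarrow> 'x vec \<Rightarrow> 'x vec set \<Rightarrow> 'x vec \<Rightarrow> 'x vec" where
  "ginv M u G g = (THE h. h \<in> G \<and> bil M g h = u)"

definition normalized_3cocycle :: "('x \<Rightarrow> 'x \<Rightarrow> 'x vec) \<Rightarrow> 'x vec \<Rightarrow> 'x vec set
    \<Rightarrow> ('x vec \<Rightarrow> 'x vec \<Rightarrow> 'x vec \<Rightarrow> complex) \<Rightarrow> bool" where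
  "normalized_3cocycle M u G w \<longleftrightarrow>
     (\<forall>x\<in>G. \<forall>y\<in>G. \<forall>z\<in>G. w x y z \<noteq> 0)
     \<and> (\<forall>x\<in>G. \<forall>y\<in>G. \<forall>z\<in>G. \<forall>t\<in>G.
          w y z t * w x (bil M y z) t * w x y z = w (bil M x y) z t * w x y (bil M z t))
     \<and> (\<forall>x\<in>G. \<forall>y\<in>G. w u x y = 1 \<and> w x u y = 1 \<and> w x y u = 1)"

definition cohomologous :: "('x \<Rightarrow> 'x \<Rightarrow> 'x vec) \<Rightarrow> 'x vec set
    \<Rightarrow> ('x vec \<Rightarrow> 'x vec \<Rightarrow> 'x vec \<Rightarrow> complex) \<Rightarrow> ('x vec \<Rightarrow> 'x vec \<Rightarrow> 'x vec \<Rightarrow> complex) \<Rightarrow> bool" where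
  "cohomologous M G w w' \<longleftrightarrow> (\<exists>f :: 'x vec \<Rightarrow> 'x vec \<Rightarrow> complex.
     (\<forall>x\<in>G. \<forall>y\<in>G. f x y \<noteq> 0)
     \<and> (\<forall>x\<in>G. \<forall>y\<in>G. \<forall>z\<in>G. w' x y z =
          w x y z * (f y z * f x (bil M y z)) / (f (bil M x y) z * f x y)))"

text \<open>Linear characters G -> C^x (only their values on G matter).\<close>
definition is_char :: "('x \<Rightarrow> 'x \<Rightarrow> 'x vec) \<Rightarrow> 'x vec set \<Rightarrow> ('x vec \<Rightarrow> complex) \<Rightarrow> bool" where
  "is_char M G \<chi> \<longleftrightarrow> (\<forall>g\<in>G. \<chi> g \<noteq> 0) \<and> (\<forall>g\<in>G. \<forall>h\<in>G. \<chi> (bil M g h) = \<chi> g * \<chi> h)"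

text \<open>j : G -> G^ a group isomorphism; j y x is the value of the character j(y) at x.\<close>
definition char_iso :: "('x \<Rightarrow> 'x \<Rightarrow> 'x vec) \<Rightarrow> 'x vec set \<Rightarrow> ('x vec \<Rightarrow> 'x vec \<Rightarrow> complex) \<Rightarrow> bool" where
  "char_iso M G j \<longleftrightarrow> (\<forall>y\<in>G. is_char M G (j y))
     \<and> (\<forall>y\<in>G. \<forall>z\<in>G. \<forall>x\<in>G. j (bil M y z) x = j y x * j z x)
     \<and> (\<forall>y\<in>G. \<forall>z\<in>G. (\<forall>x\<in>G. j y x = j z x) \<longrightarrow> y = z)
     \<and> (\<forall>\<chi>. is_char M G \<chi> \<longrightarrow> (\<exists>y\<in>G. \<forall>x\<in>G. j y x = \<chi> x))"

definition idem :: "'x vec set \<Rightarrow> ('x vec \<Rightarrow> 'x vec \<Rightarrow> complex) \<Rightarrow> 'x vec \<Rightarrow> 'x vec" where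
  "idem G j x = (\<lambda>p. (1 / of_nat (card G)) * (\<Sum>y\<in>G. inverse (j y x) * y p))"

definition phi_G :: "'x vec set \<Rightarrow> ('x vec \<Rightarrow> 'x vec \<Rightarrow> 'x vec \<Rightarrow> complex)
    \<Rightarrow> ('x vec \<Rightarrow> 'x vec \<Rightarrow> complex) \<Rightarrow> ('x \<times> 'x \<times> 'x) vec" where
  "phi_G G w j = (\<lambda>(p, q, r). \<Sum>x\<in>G. \<Sum>y\<in>G. \<Sum>z\<in>G.
      inverse (w x y z) * idem G j x p * idem G j y q * idem G j z r)"

definition beta_G :: "('x \<Rightarrow> 'x \<Rightarrow> 'x vec) \<Rightarrow> 'x vec \<Rightarrow> 'x vec set
    \<Rightarrow> ('x vec \<Rightarrow> 'x vec \<Rightarrow> 'x vec \<Rightarrow> complex) \<Rightarrow> ('x vec \<Rightarrow> 'x vec \<Rightarrow> complex) \<Rightarrow> 'x vec" where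
  "beta_G M u G w j = (\<lambda>p. \<Sum>x\<in>G. w x (ginv M u G x) x * idem G j x p)"

definition is_quasi_hopf :: "('x \<Rightarrow> 'x \<Rightarrow> 'x vec) \<Rightarrow> 'x vec \<Rightarrow> ('x \<Rightarrow> ('x \<times> 'x) vec)
    \<Rightarrow> ('x \<Rightarrow> complex) \<Rightarrow> ('x \<times> 'x \<times> 'x) vec \<Rightarrow> 'x vec \<Rightarrow> 'x vec \<Rightarrow> ('x \<Rightarrow> 'x vec) \<Rightarrow> bool" where
  "is_quasi_hopf M u D e \<phi> \<alpha> \<beta> S \<longleftrightarrow> is_qb_base M u D e
     \<and> fsupp \<phi> \<and> fsupp \<alpha> \<and> fsupp \<beta>
     \<comment> \<open>pentagon\<close>
     \<and> bil (M4 M) (bil (M4 M) (\<lambda>(p, q, r, s). u p * \<phi> (q, r, s)) (lin (idDid D) \<phi>))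
           (\<lambda>(p, q, r, s). \<phi> (p, q, r) * u s)
        = bil (M4 M) (lin (iidD D) \<phi>) (lin (Diid D) \<phi>)
     \<comment> \<open>(id (x) eps (x) id)(phi) = 1 (x) 1\<close>
     \<and> lin (\<lambda>(a, b, c). scal (e b) (basis (a, c))) \<phi> = tens u u
     \<comment> \<open>quasi-coassociativity\<close>
     \<and> (\<forall>h. bil (M3 M) \<phi> (lin (D_id D) (D h)) = bil (M3 M) (lin (id_D D) (D h)) \<phi>)
     \<comment> \<open>S anti-algebra automorphism\<close>
     \<and> lin_bij S \<and> (\<forall>x y. lin S (M x y) = bil M (S y) (S x)) \<and> lin S u = u
     \<and> (\<forall>h. lin (\<lambda>(a, b). bil M (bil M (S a) \<alpha>) (basis b)) (D h) = scal (e h) \<alpha>)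
     \<and> (\<forall>h. lin (\<lambda>(a, b). bil M (bil M (basis a) \<beta>) (S b)) (D h) = scal (e h) \<beta>)
     \<and> lin (\<lambda>(a, b, c). bil M (bil M (bil M (bil M (basis a) \<beta>) (S b)) \<alpha>) (basis c)) \<phi> = u
     \<comment> \<open>phi invertible, with inverse psi satisfying the last axiom\<close>
     \<and> (\<exists>\<psi>. fsupp \<psi> \<and> bil (M3 M) \<phi> \<psi> = tens u (tens u u) \<and> bil (M3 M) \<psi> \<phi> = tens u (tens u u)
          \<and> lin (\<lambda>(a, b, c). bil M (bil M (bil M (bil M (S a) \<alpha>) (basis b)) \<beta>) (S c)) \<psi> = u)"

definition twist_D :: "('x \<Rightarrow> 'x \<Rightarrow> 'x vec) \<Rightarrow> ('x \<Rightarrow> ('x \<times> 'x) vec)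
    \<Rightarrow> ('x \<times> 'x) vec \<Rightarrow> ('x \<times> 'x) vec \<Rightarrow> 'x \<Rightarrow> ('x \<times> 'x) vec" where
  "twist_D M D F Finv h = bil (M2 M) (bil (M2 M) F (D h)) Finv"

definition twist_phi :: "('x \<Rightarrow> 'x \<Rightarrow> 'x vec) \<Rightarrow> 'x vec \<Rightarrow> ('x \<Rightarrow> ('x \<times> 'x) vec)
    \<Rightarrow> ('x \<times> 'x \<times> 'x) vec \<Rightarrow> ('x \<times> 'x) vec \<Rightarrow> ('x \<times> 'x) vec \<Rightarrow> ('x \<times> 'x \<times> 'x) vec" where
  "twist_phi M u D \<phi> F Finv =
     bil (M3 M) (bil (M3 M) (bil (M3 M) (bil (M3 M) (\<lambda>(p, q, r). u p * F (q, r)) (lin (id_D D) F))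
        \<phi>) (lin (D_id D) Finv)) (\<lambda>(p, q, r). Finv (p, q) * u r)"

definition gauge_transf :: "('x \<Rightarrow> 'x \<Rightarrow> 'x vec) \<Rightarrow> 'x vec \<Rightarrow> ('x \<Rightarrow> complex)
    \<Rightarrow> ('x \<times> 'x) vec \<Rightarrow> ('x \<times> 'x) vec \<Rightarrow> bool" where
  "gauge_transf M u e F Finv \<longleftrightarrow> fsupp F \<and> fsupp Finv
     \<and> bil (M2 M) F Finv = tens u u \<and> bil (M2 M) Finv F = tens u u
     \<and> lin (\<lambda>(a, b). scal (e a) (basis b)) F = u
     \<and> lin (\<lambda>(a, b). scal (e b) (basis a)) F = u"

definition gauge_equiv :: "('x \<Rightarrow> 'x \<Rightarrow> 'x vec) \<Rightarrow> 'x vec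
    \<Rightarrow> ('x \<Rightarrow> ('x \<times> 'x) vec) \<Rightarrow> ('x \<Rightarrow> complex) \<Rightarrow> ('x \<times> 'x \<times> 'x) vec
    \<Rightarrow> ('x \<Rightarrow> ('x \<times> 'x) vec) \<Rightarrow> ('x \<Rightarrow> complex) \<Rightarrow> ('x \<times> 'x \<times> 'x) vec \<Rightarrow> bool" where
  "gauge_equiv M u DA eA \<phi>A DB eB \<phi>B \<longleftrightarrow>
     (\<exists>F Finv (f :: 'x \<Rightarrow> 'x vec). gauge_transf M u eB F Finv
        \<and> lin_bij f \<and> (\<forall>x y. lin f (M x y) = bil M (f x) (f y)) \<and> lin f u = u
        \<and> (\<forall>h. lin (maptens f f) (DA h) = lin (twist_D M DB F Finv) (f h))
        \<and> (\<forall>h. linf eB (f h) = eA h)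
        \<and> lin (maptens f (maptens f f)) \<phi>A = twist_phi M u DB \<phi>B F Finv)"

end

theory Submission
  imports Defs
begin

definition lc :: "'i set \<Rightarrow> ('i \<Rightarrow> complex) \<Rightarrow> ('i \<Rightarrow> 'x vec) \<Rightarrow> 'x vec" where
  "lc A c V = (\<lambda>p. \<Sum>i\<in>A. c i * V i p)"

lemma lin_lc_supp: "lin T v = lc (supp v) v T"
  by (simp add: lin_def lc_def)

lemma lin_superset:
  assumes "finite A" "supp v \<subseteq> A"
  shows "lin T v = lc A v T"
  unfolding lin_def lc_def
proof (rule ext)
  fix y
  show "(\<Sum>x\<in>supp v. v x * T x y) = (\<Sum>x\<in>A. v x * T x y)"
    by (rule sum.mono_neutral_left) (use assms in \<open>auto simp: supp_def\<close>)
qed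

lemma linf_superset:
  assumes "finite A" "supp v \<subseteq> A"
  shows "linf f v = (\<Sum>x\<in>A. v x * f x)"
  unfolding linf_def
  by (rule sum.mono_neutral_left) (use assms in \<open>auto simp: supp_def\<close>)

lemma supp_lc: "supp (lc A c V) \<subseteq> (\<Union>i\<in>A. supp (V i))"
  by (auto simp: supp_def lc_def intro: ccontr)

lemma fsupp_lc: "finite A \<Longrightarrow> (\<forall>i\<in>A. fsupp (V i)) \<Longrightarrow> fsupp (lc A c V)"
proof -
  assume a: "finite A" "\<forall>i\<in>A. fsupp (V i)"
  have "finite (\<Union>i\<in>A. supp (V i))" using a by (auto simp: fsupp_def)
  then show ?thesis unfolding fsupp_def by (rule finite_subset[OF supp_lc])
qed

lemma supp_basis[simp]: "supp (basis x) = {x}"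
  by (auto simp: supp_def basis_def)

lemma fsupp_basis[simp]: "fsupp (basis x)"
  by (simp add: fsupp_def)

lemma basis_same[simp]: "basis x x = 1"
  by (simp add: basis_def)

lemma lin_basis[simp]: "lin T (basis x) = T x"
  by (simp add: lin_def)

lemma linf_basis[simp]: "linf f (basis x) = f x"
  by (simp add: linf_def)

lemma lin_lc:
  assumes "finite A" "\<forall>i\<in>A. fsupp (V i)"
  shows "lin T (lc A c V) = lc A c (\<lambda>i. lin T (V i))"
proof -
  define B where "B = (\<Union>i\<in>A. supp (V i))"
  have fB: "finite B" using assms by (auto simp: B_def fsupp_def)
  have "lin T (lc A c V) = lc B (lc A c V) T"
    by (rule lin_superset[OF fB]) (use supp_lc[of A c V] in \<open>auto simp: B_def\<close>)
  also have "\<dots> = lc A c (\<lambda>i. lc B (V i) T)"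
    unfolding lc_def sum_distrib_right sum_distrib_left mult.assoc by (rule ext, rule sum.swap)
  also have "\<dots> = lc A c (\<lambda>i. lin T (V i))"
    unfolding lc_def
    by (intro ext sum.cong refl) (subst lin_superset[OF fB], auto simp: B_def lc_def)
  finally show ?thesis .
qed

lemma linf_lc:
  assumes "finite A" "\<forall>i\<in>A. fsupp (V i)"
  shows "linf f (lc A c V) = (\<Sum>i\<in>A. c i * linf f (V i))"
proof -
  have "linf f (lc A c V) = lin (\<lambda>x (y::unit). f x) (lc A c V) ()"
    by (simp add: linf_def lin_def)
  also have "\<dots> = lc A c (\<lambda>i. lin (\<lambda>x (y::unit). f x) (V i)) ()"
    by (simp add: lin_lc assms)
  also have "\<dots> = (\<Sum>i\<in>A. c i * linf f (V i))"
    by (simp add: lc_def linf_def lin_def)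
  finally show ?thesis .
qed

lemma fsupp_lin:
  assumes "fsupp v" "\<forall>x\<in>supp v. fsupp (T x)"
  shows "fsupp (lin T v)"
  unfolding lin_lc_supp using assms by (intro fsupp_lc) (auto simp: fsupp_def)

lemma fsupp_lin'[intro]: "fsupp v \<Longrightarrow> (\<And>x. fsupp (T x)) \<Longrightarrow> fsupp (lin T v)"
  by (simp add: fsupp_lin)

definition lmap :: "('x vec \<Rightarrow> 'y vec) \<Rightarrow> bool" where
  "lmap L \<longleftrightarrow> (\<forall>v w. fsupp v \<longrightarrow> fsupp w \<longrightarrow> L (\<lambda>p. v p + w p) = (\<lambda>q. L v q + L w q))
     \<and> (\<forall>c v. fsupp v \<longrightarrow> L (\<lambda>p. c * v p) = (\<lambda>q. c * L v q))"

lemma fsupp_add: "fsupp v \<Longrightarrow> fsupp w \<Longrightarrow> fsupp (\<lambda>p. v p + w p)"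
  unfolding fsupp_def supp_def
  by (rule finite_subset[of _ "{x. v x \<noteq> 0} \<union> {x. w x \<noteq> 0}"]) auto

lemma fsupp_smult: "fsupp v \<Longrightarrow> fsupp (\<lambda>p. c * v p)"
  unfolding fsupp_def supp_def
  by (rule finite_subset[of _ "{x. v x \<noteq> 0}"]) auto

lemma fsupp_zero[simp]: "fsupp (\<lambda>p. 0)"
  by (simp add: fsupp_def supp_def)

lemma lmap_zero: "lmap L \<Longrightarrow> L (\<lambda>p. 0) = (\<lambda>q. 0)"
proof -
  assume "lmap L"
  then have "L (\<lambda>p. 0 * (\<lambda>p. 0) p) = (\<lambda>q. 0 * L (\<lambda>p. 0) q)"
    unfolding lmap_def using fsupp_zero by blast
  then show ?thesis by simp
qed

lemma lmap_lc:
  assumes L: "lmap L" and "finite A" "\<forall>i\<in>A. fsupp (V i)"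
  shows "L (lc A c V) = lc A c (\<lambda>i. L (V i))"
  using assms(2,3)
proof (induction A rule: finite_induct)
  case empty
  then show ?case using lmap_zero[OF L] by (simp add: lc_def)
next
  case (insert i A)
  have e1: "lc (insert i A) c V = (\<lambda>p. (\<lambda>p. c i * V i p) p + lc A c V p)"
    using insert by (simp add: lc_def)
  have f1: "fsupp (\<lambda>p. c i * V i p)" using insert fsupp_smult by auto
  have f2: "fsupp (lc A c V)" using insert fsupp_lc by auto
  have "L (lc (insert i A) c V) = (\<lambda>q. L (\<lambda>p. c i * V i p) q + L (lc A c V) q)"
    unfolding e1 using L f1 f2 by (simp add: lmap_def)
  also have "\<dots> = (\<lambda>q. c i * L (V i) q + lc A c (\<lambda>i. L (V i)) q)"
    using L insert by (simp add: lmap_def)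
  also have "\<dots> = lc (insert i A) c (\<lambda>i. L (V i))"
    using insert by (simp add: lc_def)
  finally show ?case .
qed

lemma vec_expand':
  assumes fin: "fsupp v"
  shows "lc (supp v) v basis = v"
proof (rule ext)
  fix p
  show "lc (supp v) v basis p = v p"
  proof (cases "p \<in> supp v")
    case True
    then show ?thesis
      using fin by (simp add: fsupp_def lc_def basis_def if_distrib sum.delta' cong: if_cong)
  next
    case False
    then show ?thesis
      using fin by (simp add: fsupp_def lc_def basis_def if_distrib sum.delta' supp_def cong: if_cong)
  qed
qed

lemma lmap_expand:
  assumes "lmap L" "fsupp v"
  shows "L v = lin (\<lambda>x. L (basis x)) v"
proof -
  have "L v = L (lc (supp v) v basis)" by (simp add: vec_expand' assms)
  also have "\<dots> = lc (supp v) v (\<lambda>x. L (basis x))"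
    using assms by (intro lmap_lc) (auto simp: fsupp_def)
  finally show ?thesis by (simp add: lin_lc_supp)
qed

lemma lmap_eq:
  assumes "lmap L1" "lmap L2" "\<And>x. L1 (basis x) = L2 (basis x)" "fsupp v"
  shows "L1 v = L2 v"
  using lmap_expand[OF assms(1,4)] lmap_expand[OF assms(2,4)] assms(3) by simp

lemma lmap_lin[intro]: "lmap (lin T)"
proof -
  have "lin T (\<lambda>p. v p + w p) = (\<lambda>q. lin T v q + lin T w q)" if "fsupp v" "fsupp w" for v w
  proof -
    define B where "B = supp v \<union> supp w"
    have fB: "finite B" using that by (auto simp: B_def fsupp_def)
    have s: "supp (\<lambda>p. v p + w p) \<subseteq> B" by (auto simp: B_def supp_def)
    show ?thesis
      using lin_superset[OF fB s, of T] lin_superset[OF fB, of v T] lin_superset[OF fB, of w T]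
      by (auto simp: B_def lc_def sum.distrib distrib_right)
  qed
  moreover have "lin T (\<lambda>p. c * v p) = (\<lambda>q. c * lin T v q)" if "fsupp v" for c v
  proof -
    have fB: "finite (supp v)" using that by (auto simp: fsupp_def)
    have s: "supp (\<lambda>p. c * v p) \<subseteq> supp v" by (auto simp: supp_def)
    show ?thesis
      using lin_superset[OF fB s, of T] lin_superset[OF fB, of v T]
      by (auto simp: lc_def sum_distrib_left mult.assoc)
  qed
  ultimately show ?thesis by (simp add: lmap_def)
qed

lemma lmap_comp:
  assumes "lmap L1" "lmap L2" "\<And>v. fsupp v \<Longrightarrow> fsupp (L2 v)"
  shows "lmap (\<lambda>v. L1 (L2 v))"
  using assms unfolding lmap_def by (simp add: fsupp_add fsupp_smult)

lemma lmap_id[intro]: "lmap (\<lambda>v. v)"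
  by (simp add: lmap_def)

lemma lin_comp:
  assumes "fsupp v" "\<forall>z\<in>supp v. fsupp (U z)"
  shows "lin T (lin U v) = lin (\<lambda>z. lin T (U z)) v"
  unfolding lin_lc_supp[of U v] using assms
  by (subst lin_lc) (auto simp: fsupp_def lin_lc_supp[symmetric])

lemma linf_comp:
  assumes "fsupp v" "\<forall>z\<in>supp v. fsupp (U z)"
  shows "linf f (lin U v) = linf (\<lambda>z. linf f (U z)) v"
  unfolding lin_lc_supp[of U v] using assms
  by (subst linf_lc) (auto simp: fsupp_def linf_def lc_def)

lemma bil_lin1: "bil B v w = lin (\<lambda>x. lin (B x) w) v"
  by (auto simp: bil_def lin_def sum_distrib_left mult.assoc intro!: ext)

lemma bil_lin2: "bil B v w = lin (\<lambda>y. lin (\<lambda>x. B x y) v) w"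
proof (rule ext)
  fix z
  have "bil B v w z = (\<Sum>x\<in>supp v. \<Sum>y\<in>supp w. w y * (v x * B x y z))"
    unfolding bil_def by (intro sum.cong refl) (simp add: algebra_simps)
  also have "\<dots> = (\<Sum>y\<in>supp w. \<Sum>x\<in>supp v. w y * (v x * B x y z))"
    by (rule sum.swap)
  also have "\<dots> = lin (\<lambda>y. lin (\<lambda>x. B x y) v) w z"
    unfolding lin_def by (simp add: sum_distrib_left)
  finally show "bil B v w z = lin (\<lambda>y. lin (\<lambda>x. B x y) v) w z" .
qed

lemma lmap_bil1[intro]: "lmap (\<lambda>v. bil B v w)"
  unfolding bil_lin1 by (rule lmap_lin)

lemma lmap_bil2[intro]: "lmap (\<lambda>w. bil B v w)"
  unfolding bil_lin2 by (rule lmap_lin)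

lemma bil_basis1: "bil B (basis x) w = lin (B x) w"
  by (simp add: bil_lin1)

lemma bil_basis2: "bil B v (basis y) = lin (\<lambda>x. B x y) v"
  by (simp add: bil_lin2)

lemma bil_basis[simp]: "bil B (basis x) (basis y) = B x y"
  by (simp add: bil_lin1)

lemma fsupp_bil[intro]: "fsupp v \<Longrightarrow> fsupp w \<Longrightarrow> (\<And>x y. fsupp (B x y)) \<Longrightarrow> fsupp (bil B v w)"
  unfolding bil_lin1 by (intro fsupp_lin') auto

lemma lmap_bil1_lc:
  "finite A \<Longrightarrow> \<forall>i\<in>A. fsupp (V i) \<Longrightarrow> bil B (lc A c V) w = lc A c (\<lambda>i. bil B (V i) w)"
  using lmap_lc[OF lmap_bil1] by blast

lemma lmap_bil2_lc:
  "finite A \<Longrightarrow> \<forall>i\<in>A. fsupp (V i) \<Longrightarrow> bil B v (lc A c V) = lc A c (\<lambda>i. bil B v (V i))"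
  using lmap_lc[OF lmap_bil2] by blast


lemma tens_basis[simp]: "tens (basis a) (basis b) = basis (a, b)"
  by (auto simp: tens_def basis_def intro!: ext)

lemma supp_tens: "supp (tens v w) = supp v \<times> supp w"
  by (auto simp: tens_def supp_def)

lemma fsupp_tens[intro]: "fsupp v \<Longrightarrow> fsupp w \<Longrightarrow> fsupp (tens v w)"
  by (simp add: fsupp_def supp_tens)

lemma lin_tens:
  assumes "fsupp v" "fsupp w"
  shows "lin T (tens v w) = lin (\<lambda>a. lin (\<lambda>b. T (a, b)) w) v"
proof (rule ext)
  fix y
  have "lin T (tens v w) y = (\<Sum>(a,b)\<in>supp v \<times> supp w. v a * w b * T (a, b) y)"
    unfolding lin_def supp_tens by (simp add: tens_def case_prod_beta)
  also have "\<dots> = (\<Sum>a\<in>supp v. \<Sum>b\<in>supp w. v a * w b * T (a, b) y)"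
    by (simp add: sum.cartesian_product)
  also have "\<dots> = lin (\<lambda>a. lin (\<lambda>b. T (a, b)) w) v y"
    unfolding lin_def by (simp add: sum_distrib_left mult.assoc)
  finally show "lin T (tens v w) y = lin (\<lambda>a. lin (\<lambda>b. T (a, b)) w) v y" .
qed

lemma linf_tens:
  assumes "fsupp v" "fsupp w"
  shows "linf f (tens v w) = linf (\<lambda>a. linf (\<lambda>b. f (a, b)) w) v"
proof -
  have "linf f (tens v w) = (\<Sum>(a,b)\<in>supp v \<times> supp w. v a * w b * f (a, b))"
    unfolding linf_def supp_tens by (simp add: tens_def case_prod_beta)
  also have "\<dots> = (\<Sum>a\<in>supp v. \<Sum>b\<in>supp w. v a * w b * f (a, b))"
    by (simp add: sum.cartesian_product)
  also have "\<dots> = linf (\<lambda>a. linf (\<lambda>b. f (a, b)) w) v"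
    unfolding linf_def by (simp add: sum_distrib_left mult.assoc)
  finally show ?thesis .
qed

lemma lin_tens_left: "lin (\<lambda>y. tens X (W y)) d = tens X (lin W d)"
  unfolding lin_def tens_def
  by (rule ext, clarsimp simp: sum_distrib_left, rule sum.cong, simp_all add: algebra_simps)

lemma lin_tens_right: "lin (\<lambda>y. tens (W y) X) d = tens (lin W d) X"
  unfolding lin_def tens_def
  by (rule ext, clarsimp simp: sum_distrib_right, rule sum.cong, simp_all add: algebra_simps)

lemma bil_tmult:
  assumes "fsupp a" "fsupp b" "fsupp c" "fsupp d"
  shows "bil (tmult M N) (tens a b) (tens c d) = tens (bil M a c) (bil N b d)"
proof -
  have inner: "lin (tmult M N (x1, x2)) (tens c d) = tens (lin (M x1) c) (lin (N x2) d)" for x1 x2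
    using assms(3,4)
    by (simp add: lin_tens tmult_def lin_tens_left lin_tens_right)
  show ?thesis
    unfolding bil_lin1 using assms(1,2)
    by (simp add: lin_tens inner lin_tens_left lin_tens_right)
qed

lemma tens_lc1: "tens (lc A c V) w = lc A c (\<lambda>i. tens (V i) w)"
  by (auto simp: tens_def lc_def sum_distrib_right mult.assoc intro!: ext)

lemma tens_lc2: "tens v (lc A c V) = lc A c (\<lambda>i. tens v (V i))"
  by (auto simp: tens_def lc_def sum_distrib_left algebra_simps intro!: ext)

lemma alg_fsupp[intro]: "is_algebra M u \<Longrightarrow> fsupp a \<Longrightarrow> fsupp b \<Longrightarrow> fsupp (bil M a b)"
  by (rule fsupp_bil) (auto simp: is_algebra_def)

lemma alg_assoc:
  assumes A: "is_algebra M u" and fa: "fsupp a" and fb: "fsupp b" and fc: "fsupp c"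
  shows "bil M (bil M a b) c = bil M a (bil M b c)"
proof -
  have fM: "\<And>x y. fsupp (M x y)" using A by (simp add: is_algebra_def)
  have as: "\<And>x y z. bil M (M x y) (basis z) = bil M (basis x) (M y z)"
    using A by (simp add: is_algebra_def)
  have s1: "bil M (M x y) c = lin (M x) (lin (M y) c)" if "fsupp c" for x y c
  proof -
    have "bil M (M x y) c = lin (\<lambda>z. bil M (M x y) (basis z)) c"
      by (rule lmap_expand[OF lmap_bil2 that])
    also have "\<dots> = lin (\<lambda>z. lin (M x) (M y z)) c"
      by (simp add: as bil_basis1)
    also have "\<dots> = lin (M x) (lin (M y) c)"
      using lin_comp[OF that, of "M y" "M x"] fM by simp
    finally show ?thesis .
  qed
  have s2: "bil M (bil M (basis x) b) c = bil M (basis x) (bil M b c)" if "fsupp b" for x b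
  proof (rule lmap_eq[where v=b, OF _ _ _ that])
    show "lmap (\<lambda>b. bil M (bil M (basis x) b) c)"
      by (rule lmap_comp[OF lmap_bil1 lmap_bil2]) (use fM in auto)
    show "lmap (\<lambda>b. bil M (basis x) (bil M b c))"
      by (rule lmap_comp[OF lmap_bil2 lmap_bil1]) (use fM fc in auto)
    show "bil M (bil M (basis x) (basis y)) c = bil M (basis x) (bil M (basis y) c)" for y
      using s1[OF fc] by (simp add: bil_basis1)
  qed
  show ?thesis
  proof (rule lmap_eq[where v=a, OF _ _ _ fa])
    show "lmap (\<lambda>a. bil M (bil M a b) c)"
      by (rule lmap_comp[OF lmap_bil1 lmap_bil1]) (use fM fb in auto)
    show "lmap (\<lambda>a. bil M a (bil M b c))"
      by (rule lmap_bil1)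
    show "bil M (bil M (basis x) b) c = bil M (basis x) (bil M b c)" for x
      by (rule s2[OF fb])
  qed
qed

lemma alg_unit_l:
  assumes A: "is_algebra M u" and fa: "fsupp a"
  shows "bil M u a = a"
proof -
  have "bil M u a = lin (\<lambda>z. bil M u (basis z)) a"
    by (rule lmap_expand[OF lmap_bil2 fa])
  also have "\<dots> = lin basis a" using A by (simp add: is_algebra_def)
  also have "\<dots> = a" using vec_expand'[OF fa] by (simp add: lin_lc_supp)
  finally show ?thesis .
qed

lemma alg_unit_r:
  assumes A: "is_algebra M u" and fa: "fsupp a"
  shows "bil M a u = a"
proof -
  have "bil M a u = lin (\<lambda>z. bil M (basis z) u) a"
    by (rule lmap_expand[OF lmap_bil1 fa])
  also have "\<dots> = lin basis a" using A by (simp add: is_algebra_def)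
  also have "\<dots> = a" using vec_expand'[OF fa] by (simp add: lin_lc_supp)
  finally show ?thesis .
qed

lemma lin_basis_id: "fsupp a \<Longrightarrow> lin basis a = a"
  using vec_expand' by (simp add: lin_lc_supp)

lemma alg_unit_fsupp: "is_algebra M u \<Longrightarrow> fsupp u"
  by (simp add: is_algebra_def)

lemma tmult_algebra:
  assumes A: "is_algebra M u" and B: "is_algebra N u'"
  shows "is_algebra (tmult M N) (tens u u')"
proof -
  have fM: "\<And>x y. fsupp (M x y)" using A by (simp add: is_algebra_def)
  have fN: "\<And>x y. fsupp (N x y)" using B by (simp add: is_algebra_def)
  have fu: "fsupp u" "fsupp u'" using A B by (auto simp: is_algebra_def)
  have bt: "basis x = tens (basis (fst x)) (basis (snd x))" for x :: "'a \<times> 'b"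
    by simp
  have t: "tmult M N x y = tens (M (fst x) (fst y)) (N (snd x) (snd y))" for x y
    by (simp add: tmult_def case_prod_beta)
  show ?thesis
    unfolding is_algebra_def
  proof (intro conjI allI)
    show "fsupp (tmult M N x y)" for x y unfolding t using fM fN by auto
    show "fsupp (tens u u')" using fu by auto
    show "bil (tmult M N) (tmult M N x y) (basis z) = bil (tmult M N) (basis x) (tmult M N y z)" for x y z
      apply (subst (1 2) bt)
      apply (simp only: t[of x y] t[of y z])
      using fM fN
      apply (simp add: bil_tmult del: tens_basis)
      using A B unfolding is_algebra_def by (simp add: bil_basis1 bil_basis2)
    show "bil (tmult M N) (tens u u') (basis x) = basis x" for x
      apply (subst (1 2) bt)
      using fu apply (simp add: bil_tmult del: tens_basis)
      using A B unfolding is_algebra_def by simp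
    show "bil (tmult M N) (basis x) (tens u u') = basis x" for x
      apply (subst (1 2) bt)
      using fu apply (simp add: bil_tmult del: tens_basis)
      using A B unfolding is_algebra_def by simp
  qed
qed


lemma lin_lmap:
  assumes "lmap L" "fsupp v" "\<forall>x\<in>supp v. fsupp (T x)"
  shows "L (lin T v) = lin (\<lambda>x. L (T x)) v"
  unfolding lin_lc_supp using assms by (subst lmap_lc) (auto simp: fsupp_def)

lemma lin_swap: "lin (\<lambda>x. lin (\<lambda>y. F x y) w) v = lin (\<lambda>y. lin (\<lambda>x. F x y) v) w"
proof (rule ext)
  fix z
  have "lin (\<lambda>x. lin (\<lambda>y. F x y) w) v z = (\<Sum>x\<in>supp v. \<Sum>y\<in>supp w. v x * (w y * F x y z))"
    unfolding lin_def by (simp add: sum_distrib_left)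
  also have "\<dots> = (\<Sum>y\<in>supp w. \<Sum>x\<in>supp v. v x * (w y * F x y z))" by (rule sum.swap)
  also have "\<dots> = lin (\<lambda>y. lin (\<lambda>x. F x y) v) w z"
    unfolding lin_def by (simp add: sum_distrib_left algebra_simps)
  finally show "lin (\<lambda>x. lin (\<lambda>y. F x y) w) v z = lin (\<lambda>y. lin (\<lambda>x. F x y) v) w z" .
qed

lemma lin_cong: "(\<And>x. x \<in> supp v \<Longrightarrow> T x = T' x) \<Longrightarrow> lin T v = lin T' v"
  unfolding lin_def by (auto intro!: ext sum.cong)

lemma scal_lmap[intro]: "lmap (scal c)"
  by (simp add: lmap_def scal_def algebra_simps)

lemma fsupp_scal[intro]: "fsupp v \<Longrightarrow> fsupp (scal c v)"
  unfolding scal_def by (rule fsupp_smult)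

lemma lin_scal: "lin F (scal c v) = scal c (lin F v)" if "fsupp v"
  using that lmap_lin[of F] unfolding lmap_def scal_def by blast

lemma scal_scal: "scal a (scal b v) = scal (a * b) v"
  by (simp add: scal_def mult.assoc)

lemma scal_one[simp]: "scal 1 v = v"
  by (simp add: scal_def)

lemma lin_scal_const: "lin (\<lambda>x. scal (f x) X) v = scal (linf f v) X"
  by (auto simp: lin_def linf_def scal_def sum_distrib_right mult.assoc intro!: ext)

lemma bil_scal1: "fsupp v \<Longrightarrow> bil B (scal c v) w = scal c (bil B v w)"
  using lmap_bil1[of B w] unfolding lmap_def scal_def by blast

lemma bil_scal2: "fsupp w \<Longrightarrow> bil B v (scal c w) = scal c (bil B v w)"
  using lmap_bil2[of B v] unfolding lmap_def scal_def by blast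

locale hopf =
  fixes M :: "'b \<Rightarrow> 'b \<Rightarrow> 'b vec" and u :: "'b vec"
    and D :: "'b \<Rightarrow> ('b \<times> 'b) vec" and e :: "'b \<Rightarrow> complex" and S :: "'b \<Rightarrow> 'b vec"
  assumes H: "is_hopf M u D e S"
begin

lemma A: "is_algebra M u" using H by (simp add: is_hopf_def is_qb_base_def)
lemma fM[simp, intro]: "fsupp (M x y)" using A by (simp add: is_algebra_def)
lemma fu[simp, intro]: "fsupp u" using A by (simp add: is_algebra_def)
lemma fD[simp, intro]: "fsupp (D x)" using H by (simp add: is_hopf_def is_qb_base_def)
lemma fS[simp, intro]: "fsupp (S x)" using H by (simp add: is_hopf_def)
lemma Dmult: "lin D (M x y) = bil (M2 M) (D x) (D y)" using H by (simp add: is_hopf_def is_qb_base_def)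
lemma Du: "lin D u = tens u u" using H by (simp add: is_hopf_def is_qb_base_def)
lemma emult: "linf e (M x y) = e x * e y" using H by (simp add: is_hopf_def is_qb_base_def)
lemma eu: "linf e u = 1" using H by (simp add: is_hopf_def is_qb_base_def)
lemma counit1: "lin (\<lambda>(a, b). scal (e a) (basis b)) (D x) = basis x"
  using H by (simp add: is_hopf_def is_qb_base_def)
lemma counit2: "lin (\<lambda>(a, b). scal (e b) (basis a)) (D x) = basis x"
  using H by (simp add: is_hopf_def is_qb_base_def)
lemma coassoc0: "lin (D_id D) (D x) = lin (id_D D) (D x)"
  using H by (simp add: is_hopf_def)
lemma antip1: "lin (\<lambda>(a, b). bil M (S a) (basis b)) (D x) = scal (e x) u"
  using H by (simp add: is_hopf_def)
lemma antip2: "lin (\<lambda>(a, b). bil M (basis a) (S b)) (D x) = scal (e x) u"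
  using H by (simp add: is_hopf_def)

abbreviation mul where "mul v w \<equiv> bil M v w"

lemma fmul[simp, intro]: "fsupp v \<Longrightarrow> fsupp w \<Longrightarrow> fsupp (mul v w)"
  using A by (rule alg_fsupp)

lemma massoc: "fsupp a \<Longrightarrow> fsupp b \<Longrightarrow> fsupp c \<Longrightarrow> mul (mul a b) c = mul a (mul b c)"
  using A by (rule alg_assoc)

lemma munit_l[simp]: "fsupp a \<Longrightarrow> mul u a = a" using A by (rule alg_unit_l)
lemma munit_r[simp]: "fsupp a \<Longrightarrow> mul a u = a" using A by (rule alg_unit_r)

lemma fS_lin[simp, intro]: "fsupp v \<Longrightarrow> fsupp (lin S v)" by auto

definition sw :: "'b \<Rightarrow> ('b \<Rightarrow> 'b \<Rightarrow> 'c vec) \<Rightarrow> 'c vec" where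
  "sw x \<Phi> = lin (\<lambda>z. \<Phi> (fst z) (snd z)) (D x)"

lemma case_prod_fst_snd: "(\<lambda>(p, q). F p q) = (\<lambda>z. F (fst z) (snd z))"
  by (auto simp: case_prod_beta)

lemma fsupp_sw[intro]: "(\<And>p q. fsupp (\<Phi> p q)) \<Longrightarrow> fsupp (sw x \<Phi>)"
  unfolding sw_def by auto

lemma sw_lmap:
  assumes "lmap L" "\<And>p q. fsupp (\<Phi> p q)"
  shows "L (sw x \<Phi>) = sw x (\<lambda>p q. L (\<Phi> p q))"
  unfolding sw_def using assms by (subst lin_lmap) auto

lemma sw_cong:
  assumes "\<And>p q. \<Phi> p q = \<Psi> p q" shows "sw x \<Phi> = sw x \<Psi>"
proof -
  have "\<Phi> = \<Psi>" by (rule ext, rule ext, rule assms)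
  then show ?thesis by simp
qed

lemma sw_swap: "sw x (\<lambda>p q. sw y (\<lambda>r s. \<Phi> p q r s)) = sw y (\<lambda>r s. sw x (\<lambda>p q. \<Phi> p q r s))"
  unfolding sw_def by (rule lin_swap)

lemma sw_counit2: "sw x (\<lambda>p q. scal (e q) (F p)) = F x"
proof -
  have "sw x (\<lambda>p q. scal (e q) (F p)) = lin (\<lambda>z. lin F (scal (e (snd z)) (basis (fst z)))) (D x)"
    unfolding sw_def by (simp add: lin_scal)
  also have "\<dots> = lin F (lin (\<lambda>z. scal (e (snd z)) (basis (fst z))) (D x))"
    by (rule lin_comp[symmetric]) auto
  also have "\<dots> = F x" using counit2[of x] by (simp add: case_prod_fst_snd)
  finally show ?thesis .
qed

lemma sw_counit1: "sw x (\<lambda>p q. scal (e p) (F q)) = F x"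
proof -
  have "sw x (\<lambda>p q. scal (e p) (F q)) = lin (\<lambda>z. lin F (scal (e (fst z)) (basis (snd z)))) (D x)"
    unfolding sw_def by (simp add: lin_scal)
  also have "\<dots> = lin F (lin (\<lambda>z. scal (e (fst z)) (basis (snd z))) (D x))"
    by (rule lin_comp[symmetric]) auto
  also have "\<dots> = F x" using counit1[of x] by (simp add: case_prod_fst_snd)
  finally show ?thesis .
qed

lemma sw_antip1: "sw x (\<lambda>p q. mul (S p) (basis q)) = scal (e x) u"
  using antip1[of x] by (simp add: sw_def case_prod_fst_snd)

lemma sw_antip2: "sw x (\<lambda>p q. mul (basis p) (S q)) = scal (e x) u"
  using antip2[of x] by (simp add: sw_def case_prod_fst_snd)

lemma D_id_lin: "D_id D (p, q) = lin (\<lambda>z. basis (fst z, snd z, q)) (D p)"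
proof (rule ext)
  fix t :: "'b \<times> 'b \<times> 'b"
  obtain r s q' where t: "t = (r, s, q')" by (cases t) auto
  show "D_id D (p, q) t = lin (\<lambda>z. basis (fst z, snd z, q)) (D p) t"
  proof (cases "q' = q")
    case True
    have "lin (\<lambda>z. basis (fst z, snd z, q)) (D p) t = lin basis (D p) (r, s)"
      unfolding lin_def t True by (intro sum.cong refl) (auto simp: basis_def)
    then show ?thesis using True t by (simp add: lin_basis_id D_id_def)
  next
    case False
    then show ?thesis using t by (simp add: lin_def D_id_def basis_def)
  qed
qed

lemma id_D_lin: "id_D D (p, q) = lin (\<lambda>z. basis (p, fst z, snd z)) (D q)"
proof (rule ext)
  fix t :: "'b \<times> 'b \<times> 'b"
  obtain p' r s where t: "t = (p', r, s)" by (cases t) auto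
  show "id_D D (p, q) t = lin (\<lambda>z. basis (p, fst z, snd z)) (D q) t"
  proof (cases "p' = p")
    case True
    have "lin (\<lambda>z. basis (p, fst z, snd z)) (D q) t = lin basis (D q) (r, s)"
      unfolding lin_def t True by (intro sum.cong refl) (auto simp: basis_def)
    then show ?thesis using True t by (simp add: lin_basis_id id_D_def)
  next
    case False
    then show ?thesis using t by (simp add: lin_def id_D_def basis_def)
  qed
qed

lemma fsupp_D_id[intro]: "fsupp (D_id D t)"
  by (cases t) (auto simp: D_id_lin)

lemma fsupp_id_D[intro]: "fsupp (id_D D t)"
  by (cases t) (auto simp: id_D_lin)

lemma sw_coassoc:
  "sw x (\<lambda>p q. sw p (\<lambda>r s. \<Phi> r s q)) = sw x (\<lambda>p q. sw q (\<lambda>r s. \<Phi> p r s))"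
proof -
  define \<Psi> where "\<Psi> = (\<lambda>t :: 'b \<times> 'b \<times> 'b. \<Phi> (fst t) (fst (snd t)) (snd (snd t)))"
  have l: "lin \<Psi> (lin (D_id D) (D x)) = sw x (\<lambda>p q. sw p (\<lambda>r s. \<Phi> r s q))"
    unfolding sw_def
    by (subst lin_comp) (auto simp: D_id_lin lin_comp \<Psi>_def intro!: lin_cong)
  have r: "lin \<Psi> (lin (id_D D) (D x)) = sw x (\<lambda>p q. sw q (\<lambda>r s. \<Phi> p r s))"
    unfolding sw_def
    by (subst lin_comp) (auto simp: id_D_lin lin_comp \<Psi>_def intro!: lin_cong)
  show ?thesis using l r coassoc0 by simp
qed

end


context hopf
begin

definition conv :: "('b \<times> 'b \<Rightarrow> 'b vec) \<Rightarrow> ('b \<times> 'b \<Rightarrow> 'b vec) \<Rightarrow> 'b \<times> 'b \<Rightarrow> 'b vec" where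
  "conv T U = (\<lambda>ab. sw (fst ab) (\<lambda>a1 a2. sw (snd ab) (\<lambda>b1 b2. mul (T (a1, b1)) (U (a2, b2)))))"

definition eta :: "'b \<times> 'b \<Rightarrow> 'b vec" where
  "eta = (\<lambda>ab. scal (e (fst ab) * e (snd ab)) u)"

lemma fsupp_conv[intro]: "(\<And>z. fsupp (T z)) \<Longrightarrow> (\<And>z. fsupp (U z)) \<Longrightarrow> fsupp (conv T U z)"
  unfolding conv_def by (intro fsupp_sw fmul) auto

lemma fsupp_eta[intro]: "fsupp (eta z)"
  unfolding eta_def by auto

lemma mul_sw1: "(\<And>p q. fsupp (\<Phi> p q)) \<Longrightarrow> mul (sw x \<Phi>) X = sw x (\<lambda>p q. mul (\<Phi> p q) X)"
  by (rule sw_lmap[OF lmap_bil1])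

lemma mul_sw2: "(\<And>p q. fsupp (\<Phi> p q)) \<Longrightarrow> mul X (sw x \<Phi>) = sw x (\<lambda>p q. mul X (\<Phi> p q))"
  by (rule sw_lmap[OF lmap_bil2])

lemma conv_assoc:
  assumes fT: "\<And>z. fsupp (T z)" and fU: "\<And>z. fsupp (U z)" and fV: "\<And>z. fsupp (V z)"
  shows "conv (conv T U) V = conv T (conv U V)"
proof (rule ext)
  fix ab :: "'b \<times> 'b"
  obtain a b where ab: "ab = (a, b)" by (cases ab) auto
  define W where "W = (\<lambda>c c' d d' s s'. mul (T (c, c')) (mul (U (d, d')) (V (s, s'))))"
  have fW: "fsupp (W c c' d d' s s')" for c c' d d' s s' unfolding W_def using fT fU fV by auto
  have "conv (conv T U) V (a, b) = sw a (\<lambda>a1 a2. sw b (\<lambda>b1 b2. sw a1 (\<lambda>c d. sw b1 (\<lambda>c' d'. W c c' d d' a2 b2))))"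
    unfolding conv_def W_def using fT fU fV
    by (simp add: mul_sw1 massoc fsupp_sw)
  also have "\<dots> = sw a (\<lambda>a1 a2. sw a1 (\<lambda>c d. sw b (\<lambda>b1 b2. sw b1 (\<lambda>c' d'. W c c' d d' a2 b2))))"
    by (rule sw_cong, rule sw_swap)
  also have "\<dots> = sw a (\<lambda>p q. sw q (\<lambda>r s. sw b (\<lambda>b1 b2. sw b1 (\<lambda>c' d'. W p c' r d' s b2))))"
    by (rule sw_coassoc)
  also have "\<dots> = sw a (\<lambda>p q. sw q (\<lambda>r s. sw b (\<lambda>p' q'. sw q' (\<lambda>r' s'. W p p' r r' s s'))))"
    by (intro sw_cong sw_coassoc)
  also have "\<dots> = sw a (\<lambda>p q. sw b (\<lambda>p' q'. sw q (\<lambda>r s. sw q' (\<lambda>r' s'. W p p' r r' s s'))))"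
    by (rule sw_cong, rule sw_swap[symmetric])
  also have "\<dots> = conv T (conv U V) (a, b)"
    unfolding conv_def W_def using fT fU fV
    by (simp add: mul_sw2 fsupp_sw)
  finally show "conv (conv T U) V ab = conv T (conv U V) ab" using ab by simp
qed

lemma conv_eta_r:
  assumes fT: "\<And>z. fsupp (T z)"
  shows "conv T eta = T"
proof (rule ext)
  fix ab :: "'b \<times> 'b"
  obtain a b where ab: "ab = (a, b)" by (cases ab) auto
  have "conv T eta (a, b) = sw a (\<lambda>a1 a2. sw b (\<lambda>b1 b2. scal (e a2) (scal (e b2) (T (a1, b1)))))"
    unfolding conv_def eta_def using fT
    by (simp add: bil_scal2 scal_scal)
  also have "\<dots> = sw a (\<lambda>a1 a2. scal (e a2) (sw b (\<lambda>b1 b2. scal (e b2) (T (a1, b1)))))"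
    using fT by (subst sw_lmap[OF scal_lmap]) auto
  also have "\<dots> = T (a, b)"
    by (simp add: sw_counit2)
  finally show "conv T eta ab = T ab" using ab by simp
qed

lemma conv_eta_l:
  assumes fT: "\<And>z. fsupp (T z)"
  shows "conv eta T = T"
proof (rule ext)
  fix ab :: "'b \<times> 'b"
  obtain a b where ab: "ab = (a, b)" by (cases ab) auto
  have "conv eta T (a, b) = sw a (\<lambda>a1 a2. sw b (\<lambda>b1 b2. scal (e a1) (scal (e b1) (T (a2, b2)))))"
    unfolding conv_def eta_def using fT
    by (simp add: bil_scal1 scal_scal)
  also have "\<dots> = sw a (\<lambda>a1 a2. scal (e a1) (sw b (\<lambda>b1 b2. scal (e b1) (T (a2, b2)))))"
    using fT by (subst sw_lmap[OF scal_lmap]) auto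
  also have "\<dots> = T (a, b)"
    by (simp add: sw_counit1)
  finally show "conv eta T ab = T ab" using ab by simp
qed

lemma antip_vec: "fsupp v \<Longrightarrow> lin (\<lambda>(a, b). mul (S a) (basis b)) (lin D v) = scal (linf e v) u"
  by (subst lin_comp) (auto simp: antip1 lin_scal_const)

lemma lin_antip_tens:
  assumes "fsupp X" "fsupp Y"
  shows "lin (\<lambda>(a, b). mul (S a) (basis b)) (tens X Y) = mul (lin S X) Y"
proof -
  have "lin (\<lambda>(a, b). mul (S a) (basis b)) (tens X Y) = lin (\<lambda>a. lin (\<lambda>b. mul (S a) (basis b)) Y) X"
    using assms by (simp add: lin_tens)
  also have "\<dots> = lin (\<lambda>a. mul (S a) Y) X"
    using assms by (simp add: lmap_expand[OF lmap_bil2, symmetric])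
  also have "\<dots> = mul (lin S X) Y"
    using assms by (subst lin_lmap[OF lmap_bil1]) auto
  finally show ?thesis .
qed

lemma Dmult_sw: "lin D (M a b) = sw a (\<lambda>a1 a2. sw b (\<lambda>b1 b2. tens (M a1 b1) (M a2 b2)))"
  unfolding Dmult bil_lin1 sw_def tmult_def by (simp add: case_prod_fst_snd)

lemma conv_F1_m: "conv (\<lambda>ab. lin S (M (fst ab) (snd ab))) (\<lambda>ab. M (fst ab) (snd ab)) = eta"
proof (rule ext)
  fix ab :: "'b \<times> 'b"
  obtain a b where ab: "ab = (a, b)" by (cases ab) auto
  have "lin (\<lambda>(a, b). mul (S a) (basis b)) (lin D (M a b))
      = sw a (\<lambda>a1 a2. sw b (\<lambda>b1 b2. lin (\<lambda>(a, b). mul (S a) (basis b)) (tens (M a1 b1) (M a2 b2))))"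
    unfolding Dmult_sw
    by (subst sw_lmap[OF lmap_lin], simp add: fsupp_sw fsupp_tens,
        rule sw_cong, subst sw_lmap[OF lmap_lin], simp add: fsupp_tens, rule refl)
  also have "\<dots> = conv (\<lambda>ab. lin S (M (fst ab) (snd ab))) (\<lambda>ab. M (fst ab) (snd ab)) (a, b)"
    unfolding conv_def by (simp add: lin_antip_tens)
  finally have "conv (\<lambda>ab. lin S (M (fst ab) (snd ab))) (\<lambda>ab. M (fst ab) (snd ab)) (a, b) = eta (a, b)"
    by (simp add: antip_vec emult eta_def)
  then show "conv (\<lambda>ab. lin S (M (fst ab) (snd ab))) (\<lambda>ab. M (fst ab) (snd ab)) ab = eta ab"
    using ab by simp
qed

lemma conv_m_F2: "conv (\<lambda>ab. M (fst ab) (snd ab)) (\<lambda>ab. mul (S (snd ab)) (S (fst ab))) = eta"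
proof (rule ext)
  fix ab :: "'b \<times> 'b"
  obtain a b where ab: "ab = (a, b)" by (cases ab) auto
  have "mul (M a1 b1) (mul (S b2) (S a2)) = mul (basis a1) (mul (mul (basis b1) (S b2)) (S a2))"
    for a1 a2 b1 b2
    by (simp add: massoc bil_basis[symmetric, of M a1 b1] del: bil_basis)
  have "conv (\<lambda>ab. M (fst ab) (snd ab)) (\<lambda>ab. mul (S (snd ab)) (S (fst ab))) (a, b)
     = sw a (\<lambda>a1 a2. sw b (\<lambda>b1 b2. mul (basis a1) (mul (mul (basis b1) (S b2)) (S a2))))"
    unfolding conv_def
    by (simp add: massoc bil_basis[symmetric, of M] del: bil_basis)
  also have "\<dots> = sw a (\<lambda>a1 a2. mul (basis a1) (mul (sw b (\<lambda>b1 b2. mul (basis b1) (S b2))) (S a2)))"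
    by (simp add: mul_sw1 mul_sw2)
  also have "\<dots> = sw a (\<lambda>a1 a2. scal (e b) (mul (basis a1) (S a2)))"
    by (simp add: sw_antip2 bil_scal1 bil_scal2)
  also have "\<dots> = scal (e b) (scal (e a) u)"
    by (simp add: sw_lmap[OF scal_lmap, symmetric] sw_antip2)
  finally show "conv (\<lambda>ab. M (fst ab) (snd ab)) (\<lambda>ab. mul (S (snd ab)) (S (fst ab))) ab = eta ab"
    using ab by (simp add: eta_def scal_scal mult.commute)
qed

lemma S_antimult: "lin S (M x y) = mul (S y) (S x)"
proof -
  define F1 where "F1 = (\<lambda>ab. lin S (M (fst ab) (snd ab)))"
  define m where "m = (\<lambda>ab :: 'b \<times> 'b. M (fst ab) (snd ab))"
  define F2 where "F2 = (\<lambda>ab. mul (S (snd ab)) (S (fst ab)))"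
  have f1: "\<And>z. fsupp (F1 z)" and f2: "\<And>z. fsupp (F2 z)" and f3: "\<And>z. fsupp (m z)"
    unfolding F1_def F2_def m_def by auto
  have "F1 = conv F1 eta" using conv_eta_r[OF f1] by simp
  also have "\<dots> = conv F1 (conv m F2)" using conv_m_F2 unfolding m_def F2_def by simp
  also have "\<dots> = conv (conv F1 m) F2" using conv_assoc[OF f1 f3 f2] by simp
  also have "\<dots> = conv eta F2" using conv_F1_m unfolding m_def F1_def by simp
  also have "\<dots> = F2" using conv_eta_l[OF f2] by simp
  finally have "F1 (x, y) = F2 (x, y)" by simp
  then show ?thesis unfolding F1_def F2_def by simp
qed

lemma S_unit: "lin S u = u"
proof -
  have "lin (\<lambda>(a, b). mul (S a) (basis b)) (lin D u) = u"
    by (simp add: antip_vec eu)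
  then have "mul (lin S u) u = u" by (simp add: Du lin_antip_tens)
  then show ?thesis by simp
qed

end


locale qh = hopf M u D e S for M :: "'b \<Rightarrow> 'b \<Rightarrow> 'b vec" and u D e S +
  fixes G :: "'b vec set" and j :: "'b vec \<Rightarrow> 'b vec \<Rightarrow> complex"
  assumes FG: "finite_central_subgroup M u D G" and CJ: "char_iso M G j"
begin

lemma finG[simp, intro]: "finite G" using FG by (simp add: finite_central_subgroup_def)
lemma uG[simp, intro]: "u \<in> G" using FG by (simp add: finite_central_subgroup_def)
lemma mulG[simp, intro]: "g \<in> G \<Longrightarrow> h \<in> G \<Longrightarrow> mul g h \<in> G"
  using FG by (simp add: finite_central_subgroup_def)
lemma glG: "g \<in> G \<Longrightarrow> grouplike D g"
  using FG by (simp add: finite_central_subgroup_def)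
lemma fG[simp, intro]: "g \<in> G \<Longrightarrow> fsupp g" using glG by (simp add: grouplike_def)
lemma nzG: "g \<in> G \<Longrightarrow> g \<noteq> (\<lambda>_. 0)" using glG by (simp add: grouplike_def)
lemma DG: "g \<in> G \<Longrightarrow> lin D g = tens g g" using glG by (simp add: grouplike_def)
lemma centG: "g \<in> G \<Longrightarrow> mul g (basis x) = mul (basis x) g"
  using FG by (simp add: finite_central_subgroup_def)
lemma exinv: "g \<in> G \<Longrightarrow> \<exists>h\<in>G. mul g h = u"
  using FG by (simp add: finite_central_subgroup_def)

lemma commG: "g \<in> G \<Longrightarrow> fsupp v \<Longrightarrow> mul g v = mul v g"
  by (rule lmap_eq[OF lmap_bil2 lmap_bil1]) (auto simp: centG)

abbreviation gi where "gi g \<equiv> ginv M u G g"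

lemma inv_unique: "g \<in> G \<Longrightarrow> h \<in> G \<Longrightarrow> h' \<in> G \<Longrightarrow> mul g h = u \<Longrightarrow> mul g h' = u \<Longrightarrow> h = h'"
proof -
  assume a: "g \<in> G" "h \<in> G" "h' \<in> G" "mul g h = u" "mul g h' = u"
  have "h = mul (mul h g) h'" using a by (simp add: massoc)
  also have "\<dots> = h'" using a commG[of g h] by simp
  finally show ?thesis .
qed

lemma gi: "g \<in> G \<Longrightarrow> gi g \<in> G \<and> mul g (gi g) = u"
proof -
  assume g: "g \<in> G"
  obtain h where h: "h \<in> G" "mul g h = u" using exinv[OF g] by blast
  have "\<exists>!h. h \<in> G \<and> mul g h = u"
  proof (rule ex1I[of _ h])
    show "h \<in> G \<and> mul g h = u" using h by simp
    fix h' assume "h' \<in> G \<and> mul g h' = u"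
    then show "h' = h" using inv_unique[of g h' h] g h by auto
  qed
  then show ?thesis unfolding ginv_def by (rule theI')
qed

lemma giG[simp, intro]: "g \<in> G \<Longrightarrow> gi g \<in> G" using gi by blast
lemma mul_gi[simp]: "g \<in> G \<Longrightarrow> mul g (gi g) = u" using gi by blast
lemma gi_mul[simp]: "g \<in> G \<Longrightarrow> mul (gi g) g = u" using gi commG by (metis fG)

lemma gi_eq: "g \<in> G \<Longrightarrow> h \<in> G \<Longrightarrow> mul g h = u \<Longrightarrow> gi g = h"
  using inv_unique[of g "gi g" h] by simp

lemma gi_gi[simp]: "g \<in> G \<Longrightarrow> gi (gi g) = g"
  by (rule gi_eq) auto

lemma gi_u[simp]: "gi u = u" by (rule gi_eq) auto

lemma mul_cancel: "g \<in> G \<Longrightarrow> h \<in> G \<Longrightarrow> h' \<in> G \<Longrightarrow> mul g h = mul g h' \<Longrightarrow> h = h'"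
proof -
  assume a: "g \<in> G" "h \<in> G" "h' \<in> G" "mul g h = mul g h'"
  have "h = mul (mul (gi g) g) h" using a by simp
  also have "\<dots> = mul (gi g) (mul g h)" using a by (simp add: massoc del: gi_mul)
  also have "\<dots> = mul (gi g) (mul g h')" using a by simp
  also have "\<dots> = h'" using a by (simp add: massoc[symmetric])
  finally show ?thesis .
qed

lemma mul_gi_left[simp]: "g \<in> G \<Longrightarrow> h \<in> G \<Longrightarrow> mul g (mul (gi g) h) = h"
  by (simp add: massoc[symmetric])

lemma mul_gi_left2[simp]: "g \<in> G \<Longrightarrow> h \<in> G \<Longrightarrow> mul (gi g) (mul g h) = h"
  by (simp add: massoc[symmetric])

lemma gi_inj: "g \<in> G \<Longrightarrow> h \<in> G \<Longrightarrow> gi g = gi h \<Longrightarrow> g = h"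
  by (metis gi_gi)

lemma bij_mul: "g \<in> G \<Longrightarrow> bij_betw (\<lambda>h. mul g h) G G"
  unfolding bij_betw_def inj_on_def
  by (auto simp: image_def intro: mul_cancel) (metis giG mul_gi_left mulG)

lemma bij_gi: "bij_betw gi G G"
  unfolding bij_betw_def inj_on_def
  by (auto simp: image_def intro: gi_inj) (metis giG gi_gi)

lemma gi_mul_distrib: "g \<in> G \<Longrightarrow> h \<in> G \<Longrightarrow> gi (mul g h) = mul (gi g) (gi h)"
proof (rule gi_eq)
  assume a: "g \<in> G" "h \<in> G"
  show "mul g h \<in> G" "mul (gi g) (gi h) \<in> G" using a by auto
  have "mul (mul g h) (mul (gi g) (gi h)) = mul (mul g (gi g)) (mul h (gi h))"
    using a by (simp add: massoc commG[of h "mul (gi g) (gi h)"])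
  then show "mul (mul g h) (mul (gi g) (gi h)) = u" using a by simp
qed

lemma lin_scal_basis: "fsupp g \<Longrightarrow> lin (\<lambda>b. scal c (basis b)) g = scal c g"
  using lin_lmap[OF scal_lmap, of g basis c] by (simp add: lin_basis_id)

lemma eps_G: "g \<in> G \<Longrightarrow> linf e g = 1"
proof -
  assume g: "g \<in> G"
  have "lin (\<lambda>(a, b). scal (e a) (basis b)) (lin D g) = g"
    using g by (subst lin_comp) (auto simp: counit1 lin_basis_id)
  moreover have "lin (\<lambda>(a, b). scal (e a) (basis b)) (lin D g) = scal (linf e g) g"
    using g by (simp add: DG lin_tens lin_scal_basis lin_scal_const)
  ultimately have "scal (linf e g) g = g" by simp
  then have "(linf e g - 1) * g p = 0" for p
    by (metis (no_types, lifting) left_diff_distrib' mult_1 right_minus_eq scal_def)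
  then show ?thesis using nzG[OF g] by (metis eq_iff_diff_eq_0 mult_eq_0_iff ext)
qed

lemma S_G: "g \<in> G \<Longrightarrow> lin S g = gi g"
proof -
  assume g: "g \<in> G"
  have "lin (\<lambda>(a, b). mul (S a) (basis b)) (lin D g) = scal (linf e g) u"
    using g by (simp add: antip_vec)
  then have h: "mul (lin S g) g = u" using g by (simp add: DG lin_antip_tens eps_G)
  have "lin S g = mul (lin S g) (mul g (gi g))" using g by simp
  also have "\<dots> = gi g" using g by (simp add: massoc[symmetric] h del: mul_gi)
  finally show ?thesis .
qed

lemma is_char_j: "y \<in> G \<Longrightarrow> is_char M G (j y)" using CJ by (simp add: char_iso_def)
lemma j_mul1: "y \<in> G \<Longrightarrow> z \<in> G \<Longrightarrow> x \<in> G \<Longrightarrow> j (mul y z) x = j y x * j z x"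
  using CJ by (simp add: char_iso_def)
lemma j_inj: "y \<in> G \<Longrightarrow> z \<in> G \<Longrightarrow> (\<forall>x\<in>G. j y x = j z x) \<Longrightarrow> y = z"
  using CJ by (simp add: char_iso_def)

lemma char_u: "is_char M G \<chi> \<Longrightarrow> \<chi> u = 1"
proof -
  assume c: "is_char M G \<chi>"
  have "\<chi> u = \<chi> u * \<chi> u" using c unfolding is_char_def by (metis uG munit_l fu)
  moreover have "\<chi> u \<noteq> 0" using c by (simp add: is_char_def)
  ultimately show ?thesis by (metis mult_cancel_left1)
qed

lemma char_gi: "is_char M G \<chi> \<Longrightarrow> x \<in> G \<Longrightarrow> \<chi> (gi x) = inverse (\<chi> x)"
proof -
  assume c: "is_char M G \<chi>" and x: "x \<in> G"
  have "\<chi> x * \<chi> (gi x) = 1" using c x char_u[OF c] unfolding is_char_def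
    by (metis giG mul_gi)
  then show ?thesis by (simp add: field_simps inverse_eq_divide) (metis mult.commute nonzero_eq_divide_eq zero_neq_one mult_zero_left)
qed

lemma char_sum: "is_char M G \<chi> \<Longrightarrow> (\<Sum>x\<in>G. \<chi> x) = (if \<forall>x\<in>G. \<chi> x = 1 then of_nat (card G) else 0)"
proof -
  assume c: "is_char M G \<chi>"
  show ?thesis
  proof (cases "\<forall>x\<in>G. \<chi> x = 1")
    case True then show ?thesis by simp
  next
    case False
    then obtain x0 where x0: "x0 \<in> G" "\<chi> x0 \<noteq> 1" by blast
    have "(\<Sum>x\<in>G. \<chi> x) = (\<Sum>x\<in>G. \<chi> (mul x0 x))"
      using sum.reindex_bij_betw[OF bij_mul[OF x0(1)], of \<chi>] by simp
    also have "\<dots> = \<chi> x0 * (\<Sum>x\<in>G. \<chi> x)"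
      using c x0 by (simp add: is_char_def sum_distrib_left)
    finally have "(1 - \<chi> x0) * (\<Sum>x\<in>G. \<chi> x) = 0" by (simp add: algebra_simps)
    then show ?thesis using x0 False by auto
  qed
qed

lemma j_u_left: "x \<in> G \<Longrightarrow> j u x = 1"
proof -
  assume x: "x \<in> G"
  have "j u x = j u x * j u x" using j_mul1[of u u x] x by simp
  moreover have "j u x \<noteq> 0" using is_char_j[of u] x by (simp add: is_char_def)
  ultimately show ?thesis by (metis mult_cancel_left1)
qed

lemma j_u_right: "y \<in> G \<Longrightarrow> j y u = 1"
  using char_u is_char_j by blast

lemma j_mul2: "y \<in> G \<Longrightarrow> x \<in> G \<Longrightarrow> z \<in> G \<Longrightarrow> j y (mul x z) = j y x * j y z"
  using is_char_j by (simp add: is_char_def)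

lemma j_nz: "y \<in> G \<Longrightarrow> x \<in> G \<Longrightarrow> j y x \<noteq> 0"
  using is_char_j by (simp add: is_char_def)

lemma j_gi2: "y \<in> G \<Longrightarrow> x \<in> G \<Longrightarrow> j y (gi x) = inverse (j y x)"
  using char_gi is_char_j by blast

lemma j_gi1: "y \<in> G \<Longrightarrow> x \<in> G \<Longrightarrow> j (gi y) x = inverse (j y x)"
proof -
  assume a: "y \<in> G" "x \<in> G"
  have "j y x * j (gi y) x = 1" using j_mul1[of y "gi y" x] a j_u_left by simp
  then show ?thesis using a j_nz by (simp add: field_simps inverse_eq_divide)
qed

lemma row_orth: "y \<in> G \<Longrightarrow> (\<Sum>x\<in>G. j y x) = (if y = u then of_nat (card G) else 0)"
proof -
  assume y: "y \<in> G"
  have "(\<forall>x\<in>G. j y x = 1) \<longleftrightarrow> y = u"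
    using j_inj[of y u] y j_u_left by auto
  then show ?thesis using char_sum[OF is_char_j[OF y]] by simp
qed

lemma col_orth: "x \<in> G \<Longrightarrow> (\<Sum>y\<in>G. j y x) = (if x = u then of_nat (card G) else 0)"
proof -
  define s where "s x = (\<Sum>y\<in>G. j y x)" for x
  define K where "K = {x\<in>G. \<forall>y\<in>G. j y x = 1}"
  have sK: "s x = (if x \<in> K then of_nat (card G) else 0)" if x: "x \<in> G" for x
  proof -
    have hyp: "j y0 x * s x = s x" if y0: "y0 \<in> G" for y0
    proof -
      have "s x = (\<Sum>y\<in>G. j (mul y0 y) x)"
        unfolding s_def using sum.reindex_bij_betw[OF bij_mul[OF y0], of "\<lambda>y. j y x"] by simp
      also have "\<dots> = j y0 x * s x"
        unfolding s_def using y0 x by (simp add: j_mul1 sum_distrib_left)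
      finally show ?thesis by simp
    qed
    have "x \<in> K" if nz: "s x \<noteq> 0"
    proof -
      have "\<forall>y0\<in>G. j y0 x = 1"
      proof
        fix y0 assume "y0 \<in> G"
        from hyp[OF this] have "(j y0 x - 1) * s x = 0" by (simp add: algebra_simps)
        with nz show "j y0 x = 1" by simp
      qed
      then show ?thesis using x by (simp add: K_def)
    qed
    moreover have "x \<in> K \<Longrightarrow> s x = of_nat (card G)" unfolding s_def K_def by simp
    ultimately show ?thesis by auto
  qed
  have "(\<Sum>x\<in>G. s x) = (\<Sum>y\<in>G. \<Sum>x\<in>G. j y x)" unfolding s_def by (rule sum.swap)
  also have "\<dots> = (\<Sum>y\<in>G. if y = u then of_nat (card G) else 0)"
    by (rule sum.cong) (auto simp: row_orth)
  also have "\<dots> = of_nat (card G)" by simp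
  finally have s1: "(\<Sum>x\<in>G. s x) = of_nat (card G)" .
  have "(\<Sum>x\<in>G. s x) = (\<Sum>x\<in>G. if x \<in> K then of_nat (card G) else 0)"
    by (rule sum.cong) (auto simp: sK)
  also have "\<dots> = of_nat (card K) * of_nat (card G)"
    by (simp add: sum.If_cases K_def Int_def conj_commute)
  finally have "of_nat (card K) * of_nat (card G) = (of_nat (card G) :: complex)" using s1 by simp
  moreover have "card G \<noteq> 0" using uG finG by (metis card_0_eq empty_iff)
  ultimately have "card K = 1" by simp
  moreover have "u \<in> K" unfolding K_def by (simp add: j_u_right)
  ultimately have K: "K = {u}" by (metis card_1_singletonE singletonD)
  assume x: "x \<in> G"
  show ?thesis using sK[OF x] K unfolding s_def by auto
qed

end


lemma lc_cong: "(\<And>i. i \<in> A \<Longrightarrow> c i = c' i) \<Longrightarrow> (\<And>i. i \<in> A \<Longrightarrow> V i = V' i) \<Longrightarrow> lc A c V = lc A c' V'"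
  unfolding lc_def by (auto intro!: ext sum.cong)

lemma lc_swap: "lc A c (\<lambda>i. lc B (d i) V) = lc B (\<lambda>b. \<Sum>i\<in>A. c i * d i b) V"
proof (rule ext)
  fix p
  have "lc A c (\<lambda>i. lc B (d i) V) p = (\<Sum>i\<in>A. \<Sum>b\<in>B. c i * d i b * V b p)"
    unfolding lc_def by (simp add: sum_distrib_left mult.assoc)
  also have "\<dots> = (\<Sum>b\<in>B. \<Sum>i\<in>A. c i * d i b * V b p)" by (rule sum.swap)
  also have "\<dots> = lc B (\<lambda>b. \<Sum>i\<in>A. c i * d i b) V p"
    unfolding lc_def by (simp add: sum_distrib_right)
  finally show "lc A c (\<lambda>i. lc B (d i) V) p = lc B (\<lambda>b. \<Sum>i\<in>A. c i * d i b) V p" .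
qed

lemma lc_scal_vec: "lc A c (\<lambda>i. scal (f i) X) = scal (\<Sum>i\<in>A. c i * f i) X"
  unfolding lc_def scal_def by (auto simp: sum_distrib_right mult.assoc intro!: ext)

lemma lc_tens: "tens (lc A c V) (lc B d W) = lc (A \<times> B) (\<lambda>k. c (fst k) * d (snd k)) (\<lambda>k. tens (V (fst k)) (W (snd k)))"
proof (rule ext)
  fix pq :: "'a \<times> 'b"
  obtain p q where pq: "pq = (p, q)" by (cases pq) auto
  have "tens (lc A c V) (lc B d W) (p, q) = (\<Sum>a\<in>A. \<Sum>b\<in>B. c a * d b * (V a p * W b q))"
    unfolding tens_def lc_def by (simp add: sum_product algebra_simps)
  also have "\<dots> = lc (A \<times> B) (\<lambda>k. c (fst k) * d (snd k)) (\<lambda>k. tens (V (fst k)) (W (snd k))) (p, q)"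
    unfolding lc_def tens_def by (simp add: sum.cartesian_product case_prod_beta)
  finally show "tens (lc A c V) (lc B d W) pq = lc (A \<times> B) (\<lambda>k. c (fst k) * d (snd k)) (\<lambda>k. tens (V (fst k)) (W (snd k))) pq"
    using pq by simp
qed

lemma lc_reindex: "bij_betw h A B \<Longrightarrow> lc A (\<lambda>i. c (h i)) (\<lambda>i. V (h i)) = lc B c V"
  unfolding lc_def by (auto intro!: ext sum.reindex_bij_betw)

lemma lc_prod_nested: "lc (A \<times> B) c V = lc A (\<lambda>_. 1) (\<lambda>a. lc B (\<lambda>b. c (a, b)) (\<lambda>b. V (a, b)))"
  unfolding lc_def by (auto intro!: ext simp: sum.cartesian_product)

lemma lc_delta: "finite A \<Longrightarrow> b \<in> A \<Longrightarrow> lc A (\<lambda>a. if a = b then c a else 0) V = scal (c b) (V b)"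
proof -
  assume a: "finite A" "b \<in> A"
  have "(\<Sum>a\<in>A. (if a = b then c a else 0) * V a p) = (\<Sum>a\<in>A. if a = b then c a * V a p else 0)" for p
    by (rule sum.cong) auto
  then show ?thesis using a unfolding lc_def scal_def by (auto intro!: ext)
qed

lemma lc_delta': "finite A \<Longrightarrow> b \<in> A \<Longrightarrow> lc A (\<lambda>a. if b = a then c a else 0) V = scal (c b) (V b)"
  using lc_delta[of A b c V] by (simp add: eq_commute)

lemma lc_zero: "lc A (\<lambda>_. 0) V = (\<lambda>p. 0)"
  unfolding lc_def by simp

lemma lc_one_scal: "lc A (\<lambda>i. c i * d) V = scal d (lc A c V)"
  unfolding lc_def scal_def by (auto intro!: ext simp: sum_distrib_left algebra_simps)

lemma orth_mult:
  assumes fin: "finite A" and fV: "\<And>i. i \<in> A \<Longrightarrow> fsupp (V i)"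
    and orth: "\<And>k k'. k \<in> A \<Longrightarrow> k' \<in> A \<Longrightarrow> bil B (V k) (V k') = (if k = k' then V k else (\<lambda>p. 0))"
  shows "bil B (lc A c V) (lc A d V) = lc A (\<lambda>k. c k * d k) V"
proof -
  have "bil B (lc A c V) (lc A d V) = lc A c (\<lambda>k. bil B (V k) (lc A d V))"
    using fin fV by (simp add: lmap_bil1_lc)
  also have "\<dots> = lc A c (\<lambda>k. lc A d (\<lambda>k'. bil B (V k) (V k')))"
    by (rule lc_cong[OF refl]) (use fin fV in \<open>simp add: lmap_bil2_lc\<close>)
  also have "\<dots> = lc A c (\<lambda>k. scal (d k) (V k))"
  proof (rule lc_cong[OF refl])
    fix k assume k: "k \<in> A"
    have "lc A d (\<lambda>k'. bil B (V k) (V k')) = lc A (\<lambda>k'. if k' = k then d k' else 0) V"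
      unfolding lc_def using k orth by (auto intro!: ext sum.cong)
    then show "lc A d (\<lambda>k'. bil B (V k) (V k')) = scal (d k) (V k)"
      using lc_delta[OF fin k] by simp
  qed
  also have "\<dots> = lc A (\<lambda>k. c k * d k) V"
    unfolding lc_def scal_def by (auto intro!: ext sum.cong simp: mult.assoc)
  finally show ?thesis .
qed

context qh
begin

abbreviation N :: complex where "N \<equiv> of_nat (card G)"

lemma N_nz: "N \<noteq> 0"
  using uG finG by (metis card_0_eq empty_iff of_nat_eq_0_iff)

definition ee :: "'b vec \<Rightarrow> 'b vec" where "ee x = idem G j x"

lemma ee_lc: "ee x = lc G (\<lambda>y. inverse (j y x) / N) (\<lambda>y. y)"
  unfolding ee_def idem_def lc_def by (auto intro!: ext simp: sum_distrib_left)

lemma fee[simp, intro]: "fsupp (ee x)"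
  unfolding ee_lc by (rule fsupp_lc) auto

lemma mul_G_ee: "g \<in> G \<Longrightarrow> x \<in> G \<Longrightarrow> mul g (ee x) = scal (j g x) (ee x)"
proof -
  assume g: "g \<in> G" and x: "x \<in> G"
  define c where "c y = inverse (j y x) / N" for y
  have "mul g (ee x) = lc G c (\<lambda>y. mul g y)"
    unfolding ee_lc c_def by (subst lmap_bil2_lc) auto
  also have "\<dots> = lc G (\<lambda>y. j g x * c (mul g y)) (\<lambda>y. mul g y)"
    by (rule lc_cong) (use g x j_nz in \<open>auto simp: c_def j_mul1 field_simps\<close>)
  also have "\<dots> = scal (j g x) (lc G (\<lambda>y. c (mul g y)) (\<lambda>y. mul g y))"
    unfolding lc_def scal_def by (auto intro!: ext simp: sum_distrib_left mult.assoc)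
  also have "lc G (\<lambda>y. c (mul g y)) (\<lambda>y. mul g y) = ee x"
    unfolding ee_lc c_def[symmetric] by (rule lc_reindex[OF bij_mul[OF g]])
  finally show ?thesis .
qed

lemma ee_orth: "x \<in> G \<Longrightarrow> x' \<in> G \<Longrightarrow> mul (ee x) (ee x') = (if x = x' then ee x else (\<lambda>p. 0))"
proof -
  assume x: "x \<in> G" and x': "x' \<in> G"
  have "mul (ee x) (ee x') = lc G (\<lambda>y. inverse (j y x) / N) (\<lambda>y. mul y (ee x'))"
    unfolding ee_lc[of x] by (subst lmap_bil1_lc) auto
  also have "\<dots> = lc G (\<lambda>y. inverse (j y x) / N) (\<lambda>y. scal (j y x') (ee x'))"
    by (rule lc_cong) (auto simp: mul_G_ee x')
  also have "\<dots> = scal ((\<Sum>y\<in>G. j y (mul (gi x) x')) / N) (ee x')"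
    unfolding lc_scal_vec
    by (rule arg_cong[where f="\<lambda>c. scal c (ee x')"])
       (use x x' in \<open>auto simp: sum_divide_distrib j_mul2 j_gi2 intro!: sum.cong\<close>)
  also have "\<dots> = (if x = x' then ee x else (\<lambda>p. 0))"
  proof -
    have "mul (gi x) x' = u \<longleftrightarrow> x = x'"
      using x x' gi_eq[of "gi x" x'] by auto
    then show ?thesis using x x' N_nz by (auto simp: col_orth scal_def)
  qed
  finally show ?thesis .
qed

lemma ee_sum: "lc G (\<lambda>_. 1) ee = u"
proof -
  have "lc G (\<lambda>_. 1) ee = lc G (\<lambda>y. \<Sum>x\<in>G. inverse (j y x) / N) (\<lambda>y. y)"
    unfolding ee_lc lc_swap by simp
  also have "\<dots> = lc G (\<lambda>y. if y = u then 1 else 0) (\<lambda>y. y)"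
  proof (rule lc_cong[OF _ refl])
    fix y assume y: "y \<in> G"
    have "(\<Sum>x\<in>G. inverse (j y x) / N) = (\<Sum>x\<in>G. j (gi y) x) / N"
      using y by (simp add: j_gi1 sum_divide_distrib)
    also have "\<dots> = (if y = u then 1 else 0)"
      using y N_nz by (simp add: row_orth) (metis gi_gi gi_u)
    finally show "(\<Sum>x\<in>G. inverse (j y x) / N) = (if y = u then 1 else 0)" .
  qed
  also have "\<dots> = u" by (simp add: lc_delta)
  finally show ?thesis .
qed

lemma eps_ee: "x \<in> G \<Longrightarrow> linf e (ee x) = (if x = u then 1 else 0)"
proof -
  assume x: "x \<in> G"
  have "linf e (ee x) = (\<Sum>y\<in>G. inverse (j y x) / N)"
    unfolding ee_lc by (subst linf_lc) (auto simp: eps_G)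
  also have "\<dots> = (\<Sum>y\<in>G. j y (gi x)) / N"
    using x by (simp add: j_gi2 sum_divide_distrib)
  also have "\<dots> = (if x = u then 1 else 0)"
    using x N_nz by (simp add: col_orth) (metis gi_gi gi_u)
  finally show ?thesis .
qed

lemma S_ee: "x \<in> G \<Longrightarrow> lin S (ee x) = ee (gi x)"
proof -
  assume x: "x \<in> G"
  have "lin S (ee x) = lc G (\<lambda>y. inverse (j y x) / N) gi"
    unfolding ee_lc by (subst lin_lc) (auto simp: S_G intro!: lc_cong)
  also have "\<dots> = lc G (\<lambda>y. (\<lambda>y. inverse (j y (gi x)) / N) (gi y)) (\<lambda>y. gi y)"
    by (rule lc_cong) (use x in \<open>auto simp: j_gi2 j_gi1\<close>)
  also have "\<dots> = ee (gi x)"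
    unfolding ee_lc by (rule lc_reindex[OF bij_gi])
  finally show ?thesis .
qed

lemma ee_central: "fsupp v \<Longrightarrow> mul (ee x) v = mul v (ee x)"
  unfolding ee_lc by (simp add: lmap_bil1_lc lmap_bil2_lc) (rule lc_cong[OF refl], rule commG, auto)

lemma G_expand: "y \<in> G \<Longrightarrow> lc G (j y) ee = y"
proof -
  assume y: "y \<in> G"
  have "lc G (j y) ee = lc G (\<lambda>y'. \<Sum>a\<in>G. j y a * (inverse (j y' a) / N)) (\<lambda>y. y)"
    unfolding ee_lc lc_swap by simp
  also have "\<dots> = lc G (\<lambda>y'. if y' = y then 1 else 0) (\<lambda>y. y)"
  proof (rule lc_cong[OF _ refl])
    fix y' assume y': "y' \<in> G"
    have "(\<Sum>a\<in>G. j y a * (inverse (j y' a) / N)) = (\<Sum>a\<in>G. j (mul y (gi y')) a) / N"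
      using y y' by (simp add: j_mul1 j_gi1 sum_divide_distrib)
    also have "\<dots> = (if y' = y then 1 else 0)"
    proof -
      have "mul y (gi y') = u \<longleftrightarrow> y' = y"
        using y y' gi_eq[of y "gi y'"] gi_inj[of y y'] by auto
      then show ?thesis using y y' N_nz by (simp add: row_orth)
    qed
    finally show "(\<Sum>a\<in>G. j y a * (inverse (j y' a) / N)) = (if y' = y then 1 else 0)" .
  qed
  also have "\<dots> = y" using y by (simp add: lc_delta)
  finally show ?thesis .
qed

end


declare fsupp_tens[simp]

definition rtens :: "('a \<times> 'b) vec \<Rightarrow> 'c vec \<Rightarrow> ('a \<times> 'b \<times> 'c) vec" where
  "rtens X Y = (\<lambda>(p, q, r). X (p, q) * Y r)"

definition app4 :: "('a \<times> 'b \<times> 'c) vec \<Rightarrow> 'd vec \<Rightarrow> ('a \<times> 'b \<times> 'c \<times> 'd) vec" where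
  "app4 X Y = (\<lambda>(p, q, r, s). X (p, q, r) * Y s)"

lemma rtens_tens: "rtens (tens a b) Y = tens a (tens b Y)"
  by (auto simp: rtens_def tens_def intro!: ext)

lemma app4_tens: "app4 (tens a (tens b c)) Y = tens a (tens b (tens c Y))"
  by (auto simp: app4_def tens_def intro!: ext)

lemma rtens_lc1: "rtens (lc A c V) Y = lc A c (\<lambda>i. rtens (V i) Y)"
  by (auto simp: rtens_def lc_def sum_distrib_right mult.assoc intro!: ext)

lemma app4_lc: "app4 (lc A c V) (lc B d W) = lc (A \<times> B) (\<lambda>k. c (fst k) * d (snd k)) (\<lambda>k. app4 (V (fst k)) (W (snd k)))"
proof (rule ext)
  fix t :: "'a \<times> 'b \<times> 'c \<times> 'd"
  obtain p q r s where t: "t = (p, q, r, s)" by (cases t) auto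
  show "app4 (lc A c V) (lc B d W) t = lc (A \<times> B) (\<lambda>k. c (fst k) * d (snd k)) (\<lambda>k. app4 (V (fst k)) (W (snd k))) t"
  proof -
    have "app4 (lc A c V) (lc B d W) (p, q, r, s) = (\<Sum>a\<in>A. \<Sum>b\<in>B. c a * d b * (V a (p, q, r) * W b s))"
      unfolding app4_def lc_def
      by (simp add: sum_product, intro sum.cong refl, simp add: algebra_simps)
    also have "\<dots> = lc (A \<times> B) (\<lambda>k. c (fst k) * d (snd k)) (\<lambda>k. app4 (V (fst k)) (W (snd k))) (p, q, r, s)"
      unfolding lc_def app4_def by (simp add: sum.cartesian_product case_prod_beta)
    finally show ?thesis using t by simp
  qed
qed

lemma lin_rtens_left: "lin (\<lambda>i. rtens X (W i)) w = rtens X (lin W w)"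
  unfolding lin_def rtens_def
  by (rule ext, clarsimp simp: sum_distrib_left, rule sum.cong, simp_all add: algebra_simps)

lemma lin_rtens_right: "lin (\<lambda>i. rtens (W i) Y) w = rtens (lin W w) Y"
  unfolding lin_def rtens_def
  by (rule ext, clarsimp simp: sum_distrib_right, rule sum.cong, simp_all add: algebra_simps)

lemma fsupp_rtens[intro]: "fsupp X \<Longrightarrow> fsupp Y \<Longrightarrow> fsupp (rtens X Y)"
proof -
  assume a: "fsupp X" "fsupp Y"
  have "supp (rtens X Y) \<subseteq> (\<lambda>(pq, r). (fst pq, snd pq, r)) ` (supp X \<times> supp Y)"
    by (auto simp: supp_def rtens_def image_def)
  then show ?thesis using a unfolding fsupp_def by (meson finite_SigmaI finite_imageI finite_subset)
qed

declare fsupp_rtens[simp]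

lemma lin_tens3:
  assumes "fsupp v" "fsupp w" "fsupp z"
  shows "lin T (tens v (tens w z)) = lin (\<lambda>a. lin (\<lambda>b. lin (\<lambda>c. T (a, b, c)) z) w) v"
  using assms by (simp add: lin_tens)

lemma id_D_tens: "id_D D (a, b) = tens (basis a) (D b)"
  by (auto simp: id_D_def tens_def basis_def intro!: ext)

lemma D_id_rtens: "D_id D (a, b) = rtens (D a) (basis b)"
  by (auto simp: D_id_def rtens_def basis_def intro!: ext)

lemma idDid_eq: "idDid D (a, b, c) = tens (basis a) (rtens (D b) (basis c))"
  by (auto simp: idDid_def rtens_def tens_def basis_def intro!: ext)

lemma iidD_eq: "iidD D (a, b, c) = tens (basis a) (tens (basis b) (D c))"
  by (auto simp: iidD_def tens_def basis_def intro!: ext)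

lemma Diid_eq: "Diid D (a, b, c) = rtens (D a) (tens (basis b) (basis c))"
  by (auto simp: Diid_def rtens_def tens_def basis_def intro!: ext)

lemma lin_id_D_tens: "fsupp v \<Longrightarrow> fsupp w \<Longrightarrow> lin (id_D D) (tens v w) = tens v (lin D w)"
  by (simp add: lin_tens id_D_tens lin_tens_left lin_tens_right lin_basis_id)

lemma lin_D_id_tens: "fsupp v \<Longrightarrow> fsupp w \<Longrightarrow> lin (D_id D) (tens v w) = rtens (lin D v) w"
  by (simp add: lin_tens D_id_rtens lin_rtens_left lin_rtens_right lin_basis_id)

lemma lin_idDid_tens: "fsupp v \<Longrightarrow> fsupp w \<Longrightarrow> fsupp z \<Longrightarrow>
    lin (idDid D) (tens v (tens w z)) = tens v (rtens (lin D w) z)"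
  by (simp add: lin_tens idDid_eq lin_tens_left lin_tens_right lin_rtens_left lin_rtens_right lin_basis_id)

lemma lin_iidD_tens: "fsupp v \<Longrightarrow> fsupp w \<Longrightarrow> fsupp z \<Longrightarrow>
    lin (iidD D) (tens v (tens w z)) = tens v (tens w (lin D z))"
  by (simp add: lin_tens iidD_eq lin_tens_left lin_tens_right lin_basis_id)

lemma lin_lin_basis_pair: "fsupp w \<Longrightarrow> fsupp z \<Longrightarrow> lin (\<lambda>a. lin (\<lambda>b. basis (a, b)) z) w = tens w z"
  using lin_tens[of w z basis] by (simp add: lin_basis_id)

lemma lin_Diid_tens: "fsupp v \<Longrightarrow> fsupp w \<Longrightarrow> fsupp z \<Longrightarrow>
    lin (Diid D) (tens v (tens w z)) = rtens (lin D v) (tens w z)"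
  by (simp add: lin_tens Diid_eq lin_tens_left lin_tens_right lin_rtens_left lin_rtens_right lin_basis_id lin_lin_basis_pair)

lemma tens_zero1[simp]: "tens (\<lambda>p. 0) w = (\<lambda>p. 0)"
  by (auto simp: tens_def)

lemma tens_zero2[simp]: "tens v (\<lambda>p. 0) = (\<lambda>p. 0)"
  by (auto simp: tens_def)

lemma lc_nested_prod: "lc A c (\<lambda>k. lc B d (\<lambda>b. V k b)) = lc (A \<times> B) (\<lambda>kb. c (fst kb) * d (snd kb)) (\<lambda>kb. V (fst kb) (snd kb))"
  unfolding lc_def by (auto intro!: ext simp: sum.cartesian_product sum_distrib_left mult.assoc case_prod_beta)

lemma lc_reindex_witness:
  assumes "\<And>a. a \<in> A \<Longrightarrow> i (h a) = a" "\<And>a. a \<in> A \<Longrightarrow> h a \<in> B"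
    "\<And>b. b \<in> B \<Longrightarrow> h (i b) = b" "\<And>b. b \<in> B \<Longrightarrow> i b \<in> A"
  shows "lc A (\<lambda>a. c (h a)) (\<lambda>a. V (h a)) = lc B c V"
proof -
  have "bij_betw h A B" by (rule bij_betw_byWitness[of A i]) (use assms in auto)
  then show ?thesis by (rule lc_reindex)
qed

definition central :: "('x \<Rightarrow> 'x \<Rightarrow> 'x vec) \<Rightarrow> 'x vec \<Rightarrow> bool" where
  "central B a \<longleftrightarrow> (\<forall>X. fsupp X \<longrightarrow> bil B a X = bil B X a)"

lemma central_tens:
  assumes "central M a" "central N b" "fsupp a" "fsupp b"
  shows "central (tmult M N) (tens a b)"
  unfolding central_def
proof (intro allI impI)
  fix X :: "('a \<times> 'b) vec" assume X: "fsupp X"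
  show "bil (tmult M N) (tens a b) X = bil (tmult M N) X (tens a b)"
  proof (rule lmap_eq[OF lmap_bil2 lmap_bil1 _ X])
    fix x :: "'a \<times> 'b"
    have bx: "basis x = tens (basis (fst x)) (basis (snd x))" by simp
    show "bil (tmult M N) (tens a b) (basis x) = bil (tmult M N) (basis x) (tens a b)"
      apply (subst (1 2) bx)
      using assms by (simp add: bil_tmult central_def del: tens_basis)
  qed
qed

context qh
begin

definition E2 :: "'b vec \<times> 'b vec \<Rightarrow> ('b \<times> 'b) vec" where
  "E2 k = tens (ee (fst k)) (ee (snd k))"
definition E3 :: "'b vec \<times> 'b vec \<times> 'b vec \<Rightarrow> ('b \<times> 'b \<times> 'b) vec" where
  "E3 k = tens (ee (fst k)) (E2 (snd k))"
definition E4 :: "'b vec \<times> 'b vec \<times> 'b vec \<times> 'b vec \<Rightarrow> ('b \<times> 'b \<times> 'b \<times> 'b) vec" where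
  "E4 k = tens (ee (fst k)) (E3 (snd k))"

abbreviation "G2 \<equiv> G \<times> G"
abbreviation "G3 \<equiv> G \<times> G2"
abbreviation "G4 \<equiv> G \<times> G3"

lemma fE2[simp, intro]: "fsupp (E2 k)" by (auto simp: E2_def)
lemma fE3[simp, intro]: "fsupp (E3 k)" by (auto simp: E3_def)
lemma fE4[simp, intro]: "fsupp (E4 k)" by (auto simp: E4_def)

lemma E2_orth: "k \<in> G2 \<Longrightarrow> k' \<in> G2 \<Longrightarrow> bil (M2 M) (E2 k) (E2 k') = (if k = k' then E2 k else (\<lambda>p. 0))"
  unfolding E2_def by (auto simp: bil_tmult ee_orth prod_eq_iff)

lemma E3_orth: "k \<in> G3 \<Longrightarrow> k' \<in> G3 \<Longrightarrow> bil (M3 M) (E3 k) (E3 k') = (if k = k' then E3 k else (\<lambda>p. 0))"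
  unfolding E3_def by (auto simp: bil_tmult ee_orth E2_orth prod_eq_iff)

lemma E4_orth: "k \<in> G4 \<Longrightarrow> k' \<in> G4 \<Longrightarrow> bil (M4 M) (E4 k) (E4 k') = (if k = k' then E4 k else (\<lambda>p. 0))"
  unfolding E4_def by (auto simp: bil_tmult ee_orth E3_orth prod_eq_iff)

lemma orth2: "bil (M2 M) (lc G2 c E2) (lc G2 d E2) = lc G2 (\<lambda>k. c k * d k) E2"
  by (rule orth_mult) (auto simp: E2_orth)
lemma orth3: "bil (M3 M) (lc G3 c E3) (lc G3 d E3) = lc G3 (\<lambda>k. c k * d k) E3"
  by (rule orth_mult) (auto simp: E3_orth)
lemma orth4: "bil (M4 M) (lc G4 c E4) (lc G4 d E4) = lc G4 (\<lambda>k. c k * d k) E4"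
  by (rule orth_mult) (auto simp: E4_orth)

lemma central_ee: "central M (ee x)"
  unfolding central_def by (simp add: ee_central)
lemma central_E2: "central (M2 M) (E2 k)"
  unfolding E2_def by (rule central_tens) (auto simp: central_ee)
lemma central_E3: "central (M3 M) (E3 k)"
  unfolding E3_def by (rule central_tens) (auto simp: central_ee central_E2)

lemma sum_E2: "lc G2 (\<lambda>_. 1) E2 = tens u u"
  using lc_tens[of G "\<lambda>_. 1" ee G "\<lambda>_. 1" ee] by (simp add: ee_sum E2_def[abs_def])
lemma sum_E3: "lc G3 (\<lambda>_. 1) E3 = tens u (tens u u)"
  using lc_tens[of G "\<lambda>_. 1" ee G2 "\<lambda>_. 1" E2] by (simp add: ee_sum sum_E2 E3_def[abs_def])
lemma sum_E4: "lc G4 (\<lambda>_. 1) E4 = tens u (tens u (tens u u))"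
  using lc_tens[of G "\<lambda>_. 1" ee G3 "\<lambda>_. 1" E3] by (simp add: ee_sum sum_E3 E4_def[abs_def])

lemma D_ee: "x \<in> G \<Longrightarrow> lin D (ee x) = lc G (\<lambda>_. 1) (\<lambda>a. E2 (a, mul (gi a) x))"
proof -
  assume x: "x \<in> G"
  define c where "c y = inverse (j y x) / N" for y
  have "lin D (ee x) = lc G c (\<lambda>y. tens y y)"
    unfolding ee_lc c_def[symmetric] by (subst lin_lc) (auto simp: DG intro!: lc_cong)
  also have "\<dots> = lc G c (\<lambda>y. lc G2 (\<lambda>k. j y (fst k) * j y (snd k)) E2)"
    by (rule lc_cong[OF refl]) (simp add: lc_tens[symmetric] G_expand E2_def[abs_def])
  also have "\<dots> = lc G2 (\<lambda>k. \<Sum>y\<in>G. c y * (j y (fst k) * j y (snd k))) E2"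
    by (rule lc_swap)
  also have "\<dots> = lc G2 (\<lambda>k. if mul (fst k) (snd k) = x then 1 else 0) E2"
  proof (rule lc_cong[OF _ refl])
    fix k assume k: "k \<in> G2"
    obtain a b where ab: "k = (a, b)" "a \<in> G" "b \<in> G" using k by auto
    have "(\<Sum>y\<in>G. c y * (j y (fst k) * j y (snd k))) = (\<Sum>y\<in>G. j y (mul (gi x) (mul (fst k) (snd k))) / N)"
      by (rule sum.cong[OF refl]) (use ab x in \<open>simp add: c_def j_mul2 j_gi2 field_simps\<close>)
    also have "\<dots> = (\<Sum>y\<in>G. j y (mul (gi x) (mul (fst k) (snd k)))) / N"
      by (simp add: sum_divide_distrib)
    finally have "(\<Sum>y\<in>G. c y * (j y (fst k) * j y (snd k))) = (\<Sum>y\<in>G. j y (mul (gi x) (mul (fst k) (snd k)))) / N" .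
    also have "\<dots> = (if mul (fst k) (snd k) = x then 1 else 0)"
    proof -
      have "mul (gi x) (mul (fst k) (snd k)) = u \<longleftrightarrow> mul (fst k) (snd k) = x"
        using ab x gi_eq[of "gi x" "mul (fst k) (snd k)"] by auto
      then show ?thesis using ab x N_nz by (simp add: col_orth)
    qed
    finally show "(\<Sum>y\<in>G. c y * (j y (fst k) * j y (snd k))) = (if mul (fst k) (snd k) = x then 1 else 0)" .
  qed
  also have "\<dots> = lc G (\<lambda>_. 1) (\<lambda>a. lc G (\<lambda>b. if mul a b = x then 1 else 0) (\<lambda>b. E2 (a, b)))"
    by (subst lc_prod_nested) simp
  also have "\<dots> = lc G (\<lambda>_. 1) (\<lambda>a. E2 (a, mul (gi a) x))"
  proof (rule lc_cong[OF refl])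
    fix a assume a: "a \<in> G"
    have "lc G (\<lambda>b. if mul a b = x then 1 else 0) (\<lambda>b. E2 (a, b))
        = lc G (\<lambda>b. if b = mul (gi a) x then 1 else 0) (\<lambda>b. E2 (a, b))"
      by (rule lc_cong[OF _ refl]) (use a x in auto)
    then show "lc G (\<lambda>b. if mul a b = x then 1 else 0) (\<lambda>b. E2 (a, b)) = E2 (a, mul (gi a) x)"
      using a x by (simp add: lc_delta)
  qed
  finally show ?thesis .
qed

end


context qh
begin

definition W3 :: "('b vec \<Rightarrow> 'b vec \<Rightarrow> 'b vec \<Rightarrow> complex) \<Rightarrow> 'b vec \<times> 'b vec \<times> 'b vec \<Rightarrow> complex" where
  "W3 f k = f (fst k) (fst (snd k)) (snd (snd k))"

lemma E3_eq: "E3 (x, y, z) = tens (ee x) (tens (ee y) (ee z))"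
  by (simp add: E3_def E2_def)

lemma E4_eq: "E4 (x, y, z, t) = tens (ee x) (tens (ee y) (tens (ee z) (ee t)))"
  by (simp add: E4_def E3_def E2_def)

lemma phi_lc: "phi_G G w j = lc G3 (W3 (\<lambda>x y z. inverse (w x y z))) E3"
proof (rule ext)
  fix t :: "'b \<times> 'b \<times> 'b"
  obtain p q r where t: "t = (p, q, r)" by (cases t) auto
  show "phi_G G w j t = lc G3 (W3 (\<lambda>x y z. inverse (w x y z))) E3 t"
    unfolding t phi_G_def lc_def W3_def E3_def E2_def tens_def ee_def
    by (simp add: sum.cartesian_product case_prod_beta mult.assoc)
qed

lemma beta_lc: "beta_G M u G w j = lc G (\<lambda>x. w x (gi x) x) ee"
  unfolding beta_G_def lc_def ee_def by simp

lemma lin_idDid_E3: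
  assumes "k \<in> G3"
  shows "lin (idDid D) (E3 k) = lc G (\<lambda>_. 1) (\<lambda>a. E4 (fst k, a, mul (gi a) (fst (snd k)), snd (snd k)))"
proof -
  obtain x y z where k: "k = (x, y, z)" "x \<in> G" "y \<in> G" "z \<in> G" using assms by auto
  show ?thesis
    unfolding k E3_eq using k(2-4)
    by (simp add: lin_idDid_tens D_ee rtens_lc1 tens_lc2 E2_def rtens_tens E4_eq)
qed

lemma lin_iidD_E3:
  assumes "k \<in> G3"
  shows "lin (iidD D) (E3 k) = lc G (\<lambda>_. 1) (\<lambda>a. E4 (fst k, fst (snd k), a, mul (gi a) (snd (snd k))))"
proof -
  obtain x y z where k: "k = (x, y, z)" "x \<in> G" "y \<in> G" "z \<in> G" using assms by auto
  show ?thesis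
    unfolding k E3_eq using k(2-4)
    by (simp add: lin_iidD_tens D_ee tens_lc2 E2_def E4_eq)
qed

lemma lin_Diid_E3:
  assumes "k \<in> G3"
  shows "lin (Diid D) (E3 k) = lc G (\<lambda>_. 1) (\<lambda>a. E4 (a, mul (gi a) (fst k), fst (snd k), snd (snd k)))"
proof -
  obtain x y z where k: "k = (x, y, z)" "x \<in> G" "y \<in> G" "z \<in> G" using assms by auto
  show ?thesis
    unfolding k E3_eq using k(2-4)
    by (simp add: lin_Diid_tens D_ee rtens_lc1 E2_def rtens_tens E4_eq)
qed

lemma lin_lc_E3: "lin T (lc G3 c E3) = lc G3 c (\<lambda>k. lin T (E3 k))"
  by (rule lin_lc) auto

lemma pent_b: "lin (idDid D) (lc G3 c E3) = lc G4 (\<lambda>k. c (fst k, mul (fst (snd k)) (fst (snd (snd k))), snd (snd (snd k)))) E4"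
proof -
  have "lin (idDid D) (lc G3 c E3) = lc G3 c (\<lambda>k. lc G (\<lambda>_. 1) (\<lambda>a. E4 (fst k, a, mul (gi a) (fst (snd k)), snd (snd k))))"
    unfolding lin_lc_E3 by (rule lc_cong) (auto simp: lin_idDid_E3)
  also have "\<dots> = lc (G3 \<times> G) (\<lambda>ka. c (fst ka) * 1) (\<lambda>ka. E4 (fst (fst ka), snd ka, mul (gi (snd ka)) (fst (snd (fst ka))), snd (snd (fst ka))))"
    by (rule lc_nested_prod)
  also have "\<dots> = lc G4 (\<lambda>k. c (fst k, mul (fst (snd k)) (fst (snd (snd k))), snd (snd (snd k)))) E4"
    by (rule trans[OF lc_cong lc_reindex_witness[where i="\<lambda>k. ((fst k, mul (fst (snd k)) (fst (snd (snd k))), snd (snd (snd k))), fst (snd k))"]])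
       (auto simp: massoc[symmetric])
  finally show ?thesis .
qed

lemma pent_d: "lin (iidD D) (lc G3 c E3) = lc G4 (\<lambda>k. c (fst k, fst (snd k), mul (fst (snd (snd k))) (snd (snd (snd k))))) E4"
proof -
  have "lin (iidD D) (lc G3 c E3) = lc G3 c (\<lambda>k. lc G (\<lambda>_. 1) (\<lambda>a. E4 (fst k, fst (snd k), a, mul (gi a) (snd (snd k)))))"
    unfolding lin_lc_E3 by (rule lc_cong) (auto simp: lin_iidD_E3)
  also have "\<dots> = lc (G3 \<times> G) (\<lambda>ka. c (fst ka) * 1) (\<lambda>ka. E4 (fst (fst ka), fst (snd (fst ka)), snd ka, mul (gi (snd ka)) (snd (snd (fst ka)))))"
    by (rule lc_nested_prod)
  also have "\<dots> = lc G4 (\<lambda>k. c (fst k, fst (snd k), mul (fst (snd (snd k))) (snd (snd (snd k))))) E4"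
    by (rule trans[OF lc_cong lc_reindex_witness[where i="\<lambda>k. ((fst k, fst (snd k), mul (fst (snd (snd k))) (snd (snd (snd k)))), fst (snd (snd k)))"]])
       (auto simp: massoc[symmetric])
  finally show ?thesis .
qed

lemma pent_e: "lin (Diid D) (lc G3 c E3) = lc G4 (\<lambda>k. c (mul (fst k) (fst (snd k)), fst (snd (snd k)), snd (snd (snd k)))) E4"
proof -
  have "lin (Diid D) (lc G3 c E3) = lc G3 c (\<lambda>k. lc G (\<lambda>_. 1) (\<lambda>a. E4 (a, mul (gi a) (fst k), fst (snd k), snd (snd k))))"
    unfolding lin_lc_E3 by (rule lc_cong) (auto simp: lin_Diid_E3)
  also have "\<dots> = lc (G3 \<times> G) (\<lambda>ka. c (fst ka) * 1) (\<lambda>ka. E4 (snd ka, mul (gi (snd ka)) (fst (fst ka)), fst (snd (fst ka)), snd (snd (fst ka))))"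
    by (rule lc_nested_prod)
  also have "\<dots> = lc G4 (\<lambda>k. c (mul (fst k) (fst (snd k)), fst (snd (snd k)), snd (snd (snd k)))) E4"
    by (rule trans[OF lc_cong lc_reindex_witness[where i="\<lambda>k. ((mul (fst k) (fst (snd k)), fst (snd (snd k)), snd (snd (snd k))), fst k)"]])
       (auto simp: massoc[symmetric])
  finally show ?thesis .
qed

lemma pent_a: "(\<lambda>(p, q, r, s). u p * lc G3 c E3 (q, r, s)) = lc G4 (\<lambda>k. c (snd k)) E4"
proof -
  have "(\<lambda>(p, q, r, s). u p * lc G3 c E3 (q, r, s)) = tens u (lc G3 c E3)"
    by (auto simp: tens_def intro!: ext)
  also have "\<dots> = tens (lc G (\<lambda>_. 1) ee) (lc G3 c E3)" by (simp add: ee_sum)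
  also have "\<dots> = lc G4 (\<lambda>k. c (snd k)) E4"
    unfolding lc_tens by (rule lc_cong) (auto simp: E4_def)
  finally show ?thesis .
qed

lemma pent_c: "(\<lambda>(p, q, r, s). lc G3 c E3 (p, q, r) * u s) = lc G4 (\<lambda>k. c (fst k, fst (snd k), fst (snd (snd k)))) E4"
proof -
  have "(\<lambda>(p, q, r, s). lc G3 c E3 (p, q, r) * u s) = app4 (lc G3 c E3) (lc G (\<lambda>_. 1) ee)"
    by (simp add: app4_def ee_sum)
  also have "\<dots> = lc (G3 \<times> G) (\<lambda>k. c (fst k) * 1) (\<lambda>k. app4 (E3 (fst k)) (ee (snd k)))"
    by (rule app4_lc)
  also have "\<dots> = lc (G3 \<times> G) (\<lambda>k. c (fst k)) (\<lambda>k. E4 (fst (fst k), fst (snd (fst k)), snd (snd (fst k)), snd k))"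
    by (rule lc_cong) (auto simp: E3_def E2_def E4_def app4_tens)
  also have "\<dots> = lc G4 (\<lambda>k. c (fst k, fst (snd k), fst (snd (snd k)))) E4"
    by (rule trans[OF lc_cong lc_reindex_witness[where i="\<lambda>k. ((fst k, fst (snd k), fst (snd (snd k))), snd (snd (snd k)))"]])
       auto
  finally show ?thesis .
qed

lemma fphi: "fsupp (lc G3 c E3)" by (rule fsupp_lc) auto

lemma central_lc:
  fixes B :: "'x \<Rightarrow> 'x \<Rightarrow> 'x vec"
  assumes "finite A" "\<And>i. i \<in> A \<Longrightarrow> fsupp (V i)" "\<And>i. i \<in> A \<Longrightarrow> central B (V i)"
  shows "central B (lc A c V)"
  unfolding central_def
proof (intro allI impI)
  fix X :: "'x vec" assume X: "fsupp X"
  have "bil B (lc A c V) X = lc A c (\<lambda>i. bil B (V i) X)" using assms by (simp add: lmap_bil1_lc)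
  also have "\<dots> = lc A c (\<lambda>i. bil B X (V i))"
    by (rule lc_cong[OF refl]) (use assms X in \<open>auto simp: central_def\<close>)
  also have "\<dots> = bil B X (lc A c V)" using assms by (simp add: lmap_bil2_lc)
  finally show "bil B (lc A c V) X = bil B X (lc A c V)" .
qed

lemma pentagon:
  assumes W: "normalized_3cocycle M u G w"
  shows "bil (M4 M) (bil (M4 M) (\<lambda>(p, q, r, s). u p * phi_G G w j (q, r, s)) (lin (idDid D) (phi_G G w j)))
           (\<lambda>(p, q, r, s). phi_G G w j (p, q, r) * u s)
        = bil (M4 M) (lin (iidD D) (phi_G G w j)) (lin (Diid D) (phi_G G w j))"
  unfolding phi_lc pent_a pent_b pent_c pent_d pent_e orth4
proof (rule lc_cong[OF _ refl])
  fix k assume k: "k \<in> G4"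
  obtain x y z t where kk: "k = (x, y, z, t)" "x \<in> G" "y \<in> G" "z \<in> G" "t \<in> G" using k by auto
  have nz: "\<And>a b c. a \<in> G \<Longrightarrow> b \<in> G \<Longrightarrow> c \<in> G \<Longrightarrow> w a b c \<noteq> 0"
    using W by (simp add: normalized_3cocycle_def)
  have co: "w y z t * w x (mul y z) t * w x y z = w (mul x y) z t * w x y (mul z t)"
    using W kk by (simp add: normalized_3cocycle_def)
  show "W3 (\<lambda>x y z. inverse (w x y z)) (snd k) *
        W3 (\<lambda>x y z. inverse (w x y z)) (fst k, mul (fst (snd k)) (fst (snd (snd k))), snd (snd (snd k))) *
        W3 (\<lambda>x y z. inverse (w x y z)) (fst k, fst (snd k), fst (snd (snd k))) =
        W3 (\<lambda>x y z. inverse (w x y z)) (fst k, fst (snd k), mul (fst (snd (snd k))) (snd (snd (snd k)))) *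
        W3 (\<lambda>x y z. inverse (w x y z)) (mul (fst k) (fst (snd k)), fst (snd (snd k)), snd (snd (snd k)))"
    unfolding kk W3_def using co
    by (simp add: mult_inverse_of_nat_commute flip: inverse_mult_distrib)
qed

end


lemma lin_tri:
  assumes fv: "fsupp v" and fw: "fsupp w" and fz: "fsupp z"
    and L1: "lmap (\<lambda>v. F v w z)"
    and L2: "\<And>a. lmap (\<lambda>w. F (basis a) w z)"
    and L3: "\<And>a b. lmap (\<lambda>z. F (basis a) (basis b) z)"
  shows "lin (\<lambda>t. F (basis (fst t)) (basis (fst (snd t))) (basis (snd (snd t)))) (tens v (tens w z)) = F v w z"
proof -
  have "lin (\<lambda>t. F (basis (fst t)) (basis (fst (snd t))) (basis (snd (snd t)))) (tens v (tens w z))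
      = lin (\<lambda>a. lin (\<lambda>b. lin (\<lambda>c. F (basis a) (basis b) (basis c)) z) w) v"
    using fv fw fz by (simp add: lin_tens)
  also have "\<dots> = lin (\<lambda>a. lin (\<lambda>b. F (basis a) (basis b) z) w) v"
    using lmap_expand[OF L3 fz] by simp
  also have "\<dots> = lin (\<lambda>a. F (basis a) w z) v"
    using lmap_expand[OF L2 fw] by simp
  also have "\<dots> = F v w z"
    using lmap_expand[OF L1 fv] by simp
  finally show ?thesis .
qed

lemma lmap_tens1[intro]: "lmap (\<lambda>v. tens v z)"
  by (auto simp: lmap_def tens_def algebra_simps)

lemma lmap_tens2[intro]: "lmap (\<lambda>z. tens v z)"
  by (auto simp: lmap_def tens_def algebra_simps)

lemma linf_as_lin: "linf f v = lin (\<lambda>x (y::unit). f x) v ()"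
  by (simp add: linf_def lin_def)

lemma lmap_scal_linf[intro]: "lmap (\<lambda>w. scal (linf f w) X)"
proof -
  have a: "linf f (\<lambda>p. v p + w p) = linf f v + linf f w" if "fsupp v" "fsupp w" for v w
    using lmap_lin[of "\<lambda>x (y::unit). f x"] that unfolding lmap_def linf_as_lin by metis
  have b: "linf f (\<lambda>p. c * v p) = c * linf f v" if "fsupp v" for c v
    using lmap_lin[of "\<lambda>x (y::unit). f x"] that unfolding lmap_def linf_as_lin by metis
  show ?thesis unfolding lmap_def scal_def using a b by (simp add: algebra_simps)
qed

lemma sum3: "(\<Sum>k\<in>A \<times> B \<times> C. f k) = (\<Sum>a\<in>A. \<Sum>b\<in>B. \<Sum>x\<in>C. f (a, b, x))"
  by (simp add: sum.cartesian_product split_beta)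

lemma collapse_mid:
  assumes "finite A" "finite B" "finite C" "b0 \<in> B"
  shows "lc (A \<times> B \<times> C) (\<lambda>k. if fst (snd k) = b0 then c k else 0) V
       = lc (A \<times> C) (\<lambda>k. c (fst k, b0, snd k)) (\<lambda>k. V (fst k, b0, snd k))"
proof (rule ext)
  fix p
  have "lc (A \<times> B \<times> C) (\<lambda>k. if fst (snd k) = b0 then c k else 0) V p
      = (\<Sum>a\<in>A. \<Sum>b\<in>B. \<Sum>x\<in>C. if b = b0 then c (a, b, x) * V (a, b, x) p else 0)"
    unfolding lc_def sum3 by (intro sum.cong refl) simp
  also have "\<dots> = (\<Sum>a\<in>A. \<Sum>b\<in>B. if b = b0 then (\<Sum>x\<in>C. c (a, b, x) * V (a, b, x) p) else 0)"
    by (intro sum.cong refl) auto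
  also have "\<dots> = (\<Sum>a\<in>A. \<Sum>x\<in>C. c (a, b0, x) * V (a, b0, x) p)"
    using assms by simp
  also have "\<dots> = lc (A \<times> C) (\<lambda>k. c (fst k, b0, snd k)) (\<lambda>k. V (fst k, b0, snd k)) p"
    unfolding lc_def by (simp add: sum.cartesian_product split_beta)
  finally show "lc (A \<times> B \<times> C) (\<lambda>k. if fst (snd k) = b0 then c k else 0) V p
       = lc (A \<times> C) (\<lambda>k. c (fst k, b0, snd k)) (\<lambda>k. V (fst k, b0, snd k)) p" .
qed

lemma collapse2:
  assumes "finite A" "finite B" "finite C" "\<And>a. a \<in> A \<Longrightarrow> f a \<in> B" "\<And>a. a \<in> A \<Longrightarrow> g a \<in> C"
  shows "lc (A \<times> B \<times> C) (\<lambda>k. if fst (snd k) = f (fst k) \<and> snd (snd k) = g (fst k) then c k else 0) V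
       = lc A (\<lambda>a. c (a, f a, g a)) (\<lambda>a. V (a, f a, g a))"
proof (rule ext)
  fix p
  define H where "H a b x = c (a, b, x) * V (a, b, x) p" for a b x
  have "lc (A \<times> B \<times> C) (\<lambda>k. if fst (snd k) = f (fst k) \<and> snd (snd k) = g (fst k) then c k else 0) V p
      = (\<Sum>a\<in>A. \<Sum>b\<in>B. \<Sum>x\<in>C. if b = f a \<and> x = g a then H a b x else 0)"
    unfolding lc_def sum3 H_def by (intro sum.cong refl) auto
  also have "\<dots> = (\<Sum>a\<in>A. \<Sum>b\<in>B. if b = f a then (\<Sum>x\<in>C. if x = g a then H a b x else 0) else 0)"
    by (intro sum.cong refl) auto
  also have "\<dots> = (\<Sum>a\<in>A. H a (f a) (g a))"
    using assms by (intro sum.cong refl) simp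
  finally show "lc (A \<times> B \<times> C) (\<lambda>k. if fst (snd k) = f (fst k) \<and> snd (snd k) = g (fst k) then c k else 0) V p
       = lc A (\<lambda>a. c (a, f a, g a)) (\<lambda>a. V (a, f a, g a)) p" unfolding lc_def H_def .
qed

context qh
begin

lemma ee_mul_lc: "x \<in> G \<Longrightarrow> mul (ee x) (lc G c ee) = scal (c x) (ee x)"
proof -
  assume x: "x \<in> G"
  have "mul (ee x) (lc G c ee) = lc G c (\<lambda>a. mul (ee x) (ee a))" by (simp add: lmap_bil2_lc)
  also have "\<dots> = lc G (\<lambda>a. if a = x then c a else 0) ee"
    unfolding lc_def using x by (auto intro!: ext sum.cong simp: ee_orth)
  also have "\<dots> = scal (c x) (ee x)" using x by (simp add: lc_delta)
  finally show ?thesis .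
qed

lemma lc_mul_ee: "x \<in> G \<Longrightarrow> mul (lc G c ee) (ee x) = scal (c x) (ee x)"
  using ee_mul_lc[of x c] ee_central[of "lc G c ee" x] fsupp_lc[of G ee c] by auto

lemma ee_orth_scal: "x \<in> G \<Longrightarrow> y \<in> G \<Longrightarrow> mul (ee x) (ee y) = scal (if x = y then 1 else 0) (ee x)"
  by (auto simp: ee_orth scal_def)

lemma counit_phi:
  assumes W: "normalized_3cocycle M u G w"
  shows "lin (\<lambda>(a, b, c). scal (e b) (basis (a, c))) (phi_G G w j) = tens u u"
proof -
  define F where "F v w z = scal (linf e w) (tens v z)" for v w z :: "'b vec"
  have T: "(\<lambda>(a, b, c). scal (e b) (basis (a, c))) = (\<lambda>t. F (basis (fst t)) (basis (fst (snd t))) (basis (snd (snd t))))"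
    by (auto simp: F_def intro!: ext)
  have FE: "lin (\<lambda>(a, b, c). scal (e b) (basis (a, c))) (E3 k) = scal (if fst (snd k) = u then 1 else 0) (E2 (fst k, snd (snd k)))"
    if k: "k \<in> G3" for k
  proof -
    obtain x y z where kk: "k = (x, y, z)" "x \<in> G" "y \<in> G" "z \<in> G" using k by auto
    have "lin (\<lambda>(a, b, c). scal (e b) (basis (a, c))) (E3 k) = F (ee x) (ee y) (ee z)"
      unfolding T kk E3_eq
    proof (rule lin_tri)
      show "lmap (\<lambda>v. F v (ee y) (ee z))" unfolding F_def
        by (rule lmap_comp[OF scal_lmap lmap_tens1]) auto
      show "lmap (\<lambda>w. F (basis a) w (ee z))" for a unfolding F_def by (rule lmap_scal_linf)
      show "lmap (\<lambda>z. F (basis a) (basis b) z)" for a b unfolding F_def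
        by (rule lmap_comp[OF scal_lmap lmap_tens2]) auto
    qed auto
    then show ?thesis using kk by (simp add: F_def eps_ee E2_def)
  qed
  have "lin (\<lambda>(a, b, c). scal (e b) (basis (a, c))) (phi_G G w j)
      = lc G3 (W3 (\<lambda>x y z. inverse (w x y z))) (\<lambda>k. scal (if fst (snd k) = u then 1 else 0) (E2 (fst k, snd (snd k))))"
    unfolding phi_lc lin_lc_E3 by (rule lc_cong) (auto simp: FE)
  also have "\<dots> = lc G3 (\<lambda>k. if fst (snd k) = u then W3 (\<lambda>x y z. inverse (w x y z)) k else 0) (\<lambda>k. E2 (fst k, snd (snd k)))"
    unfolding lc_def scal_def by (auto intro!: ext sum.cong)
  also have "\<dots> = lc G2 (\<lambda>k. W3 (\<lambda>x y z. inverse (w x y z)) (fst k, u, snd k)) (\<lambda>k. E2 (fst k, snd k))"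
    by (subst collapse_mid) auto
  also have "\<dots> = lc G2 (\<lambda>_. 1) E2"
    by (rule lc_cong) (use W in \<open>auto simp: W3_def normalized_3cocycle_def\<close>)
  also have "\<dots> = tens u u" by (rule sum_E2)
  finally show ?thesis .
qed

lemma fbeta[simp, intro]: "fsupp (beta_G M u G w j)"
  unfolding beta_lc by (rule fsupp_lc) auto

lemma mul_scal1: "fsupp v \<Longrightarrow> fsupp z \<Longrightarrow> mul (scal c v) z = scal c (mul v z)"
  by (simp add: bil_scal1)

lemma w_inv_id:
  assumes W: "normalized_3cocycle M u G w" and x: "x \<in> G"
  shows "w (gi x) x (gi x) * w x (gi x) x = 1"
proof -
  have "w (gi x) x (gi x) * w x (mul (gi x) x) (gi x) * w x (gi x) x = w (mul x (gi x)) x (gi x) * w x (gi x) (mul x (gi x))"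
    using W x unfolding normalized_3cocycle_def by (meson giG)
  then show ?thesis using W x by (simp add: normalized_3cocycle_def)
qed

lemma axiom_phi_beta:
  assumes W: "normalized_3cocycle M u G w"
  shows "lin (\<lambda>(a, b, c). mul (mul (mul (mul (basis a) (beta_G M u G w j)) (S b)) u) (basis c)) (phi_G G w j) = u"
proof -
  define bc where "bc x = w x (gi x) x" for x
  define \<beta> where "\<beta> = beta_G M u G w j"
  have b: "\<beta> = lc G bc ee" unfolding \<beta>_def beta_lc bc_def ..
  have fb: "fsupp \<beta>" unfolding \<beta>_def by simp
  define F where "F v w z = mul (mul (mul (mul v \<beta>) (lin S w)) u) z" for v w z
  have T: "(\<lambda>(a, b, c). mul (mul (mul (mul (basis a) \<beta>) (S b)) u) (basis c)) = (\<lambda>t. F (basis (fst t)) (basis (fst (snd t))) (basis (snd (snd t))))"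
    by (auto simp: F_def intro!: ext)
  have FE: "lin (\<lambda>(a, b, c). mul (mul (mul (mul (basis a) \<beta>) (S b)) u) (basis c)) (E3 k)
      = scal (if fst (snd k) = gi (fst k) \<and> snd (snd k) = fst k then bc (fst k) else 0) (ee (fst k))"
    if k: "k \<in> G3" for k
  proof -
    obtain x y z where kk: "k = (x, y, z)" "x \<in> G" "y \<in> G" "z \<in> G" using k by auto
    have "lin (\<lambda>(a, b, c). mul (mul (mul (mul (basis a) \<beta>) (S b)) u) (basis c)) (E3 k) = F (ee x) (ee y) (ee z)"
      unfolding T kk E3_eq
    proof (rule lin_tri)
      show "lmap (\<lambda>v. F v (ee y) (ee z))" unfolding F_def
        by (rule lmap_comp[OF lmap_bil1], rule lmap_comp[OF lmap_bil1], rule lmap_comp[OF lmap_bil1], rule lmap_bil1)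
           (auto simp: fb)
      show "lmap (\<lambda>w. F (basis a) w (ee z))" for a unfolding F_def
        by (rule lmap_comp[OF lmap_bil1], rule lmap_comp[OF lmap_bil1], rule lmap_comp[OF lmap_bil2], rule lmap_lin)
           (auto simp: fb)
      show "lmap (\<lambda>z. F (basis a) (basis b) z)" for a b unfolding F_def by (rule lmap_bil2)
    qed auto
    also have "\<dots> = scal (if y = gi x \<and> z = x then bc x else 0) (ee x)"
    proof -
      have s1: "mul (ee x) \<beta> = scal (bc x) (ee x)" using kk by (simp add: b ee_mul_lc)
      have s2: "lin S (ee y) = ee (gi y)" using kk by (simp add: S_ee)
      have s3: "mul (scal (bc x) (ee x)) (ee (gi y)) = scal (bc x * (if x = gi y then 1 else 0)) (ee x)"
        using kk by (simp add: mul_scal1 ee_orth_scal scal_scal)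
      have s4: "mul (scal c (ee x)) u = scal c (ee x)" for c by (simp add: fsupp_scal)
      have s5: "mul (scal c (ee x)) (ee z) = scal (c * (if x = z then 1 else 0)) (ee x)" for c
        using kk by (simp add: mul_scal1 ee_orth_scal scal_scal)
      have e: "x = gi y \<longleftrightarrow> y = gi x" using kk by auto
      show ?thesis unfolding F_def s1 s2 s3 s4 s5 e by (auto simp: eq_commute)
    qed
    finally show ?thesis using kk by simp
  qed
  have "lin (\<lambda>(a, b, c). mul (mul (mul (mul (basis a) \<beta>) (S b)) u) (basis c)) (phi_G G w j)
      = lc G3 (W3 (\<lambda>x y z. inverse (w x y z))) (\<lambda>k. scal (if fst (snd k) = gi (fst k) \<and> snd (snd k) = fst k then bc (fst k) else 0) (ee (fst k)))"
    unfolding phi_lc lin_lc_E3 by (rule lc_cong) (auto simp: FE)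
  also have "\<dots> = lc G3 (\<lambda>k. if fst (snd k) = gi (fst k) \<and> snd (snd k) = fst k then W3 (\<lambda>x y z. inverse (w x y z)) k * bc (fst k) else 0) (\<lambda>k. ee (fst k))"
    unfolding lc_def scal_def by (auto intro!: ext sum.cong)
  also have "\<dots> = lc G (\<lambda>x. W3 (\<lambda>x y z. inverse (w x y z)) (x, gi x, x) * bc x) ee"
    by (subst collapse2) auto
  also have "\<dots> = lc G (\<lambda>_. 1) ee"
    by (rule lc_cong) (use W in \<open>auto simp: W3_def bc_def normalized_3cocycle_def\<close>)
  also have "\<dots> = u" by (rule ee_sum)
  finally show ?thesis unfolding \<beta>_def .
qed

lemma axiom_psi:
  assumes W: "normalized_3cocycle M u G w"
  shows "lin (\<lambda>(a, b, c). mul (mul (mul (mul (S a) u) (basis b)) (beta_G M u G w j)) (S c)) (lc G3 (W3 w) E3) = u"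
proof -
  define bc where "bc x = w x (gi x) x" for x
  define \<beta> where "\<beta> = beta_G M u G w j"
  have b: "\<beta> = lc G bc ee" unfolding \<beta>_def beta_lc bc_def ..
  have fb: "fsupp \<beta>" unfolding \<beta>_def by simp
  define F where "F v w z = mul (mul (mul (mul (lin S v) u) w) \<beta>) (lin S z)" for v w z
  have T: "(\<lambda>(a, b, c). mul (mul (mul (mul (S a) u) (basis b)) \<beta>) (S c)) = (\<lambda>t. F (basis (fst t)) (basis (fst (snd t))) (basis (snd (snd t))))"
    by (auto simp: F_def intro!: ext)
  have FE: "lin (\<lambda>(a, b, c). mul (mul (mul (mul (S a) u) (basis b)) \<beta>) (S c)) (E3 k)
      = scal (if fst (snd k) = gi (fst k) \<and> snd (snd k) = fst k then bc (gi (fst k)) else 0) (ee (gi (fst k)))"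
    if k: "k \<in> G3" for k
  proof -
    obtain x y z where kk: "k = (x, y, z)" "x \<in> G" "y \<in> G" "z \<in> G" using k by auto
    have "lin (\<lambda>(a, b, c). mul (mul (mul (mul (S a) u) (basis b)) \<beta>) (S c)) (E3 k) = F (ee x) (ee y) (ee z)"
      unfolding T kk E3_eq
    proof (rule lin_tri)
      show "lmap (\<lambda>v. F v (ee y) (ee z))" unfolding F_def
        by (rule lmap_comp[OF lmap_bil1], rule lmap_comp[OF lmap_bil1], rule lmap_comp[OF lmap_bil1],
            rule lmap_comp[OF lmap_bil1], rule lmap_lin) (auto simp: fb)
      show "lmap (\<lambda>w. F (basis a) w (ee z))" for a unfolding F_def
        by (rule lmap_comp[OF lmap_bil1], rule lmap_comp[OF lmap_bil1], rule lmap_bil2)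
           (auto simp: fb)
      show "lmap (\<lambda>z. F (basis a) (basis b) z)" for a b unfolding F_def
        by (rule lmap_comp[OF lmap_bil2], rule lmap_lin) auto
    qed auto
    also have "\<dots> = scal (if y = gi x \<and> z = x then bc (gi x) else 0) (ee (gi x))"
    proof -
      have e1: "gi x = gi z \<longleftrightarrow> z = x" using kk gi_inj by blast
      have s1: "lin S (ee x) = ee (gi x)" "lin S (ee z) = ee (gi z)" using kk by (simp_all add: S_ee)
      have s2: "mul (ee (gi x)) u = ee (gi x)" by simp
      have s3: "mul (ee (gi x)) (ee y) = scal (if gi x = y then 1 else 0) (ee (gi x))"
        using kk by (simp add: ee_orth_scal)
      have s4a: "mul (ee (gi x)) \<beta> = scal (bc (gi x)) (ee (gi x))" using kk by (simp add: b ee_mul_lc)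
      have s4: "mul (scal c (ee (gi x))) \<beta> = scal (c * bc (gi x)) (ee (gi x))" for c
        using kk fb by (simp add: mul_scal1 s4a scal_scal)
      have s5: "mul (scal c (ee (gi x))) (ee (gi z)) = scal (c * (if gi x = gi z then 1 else 0)) (ee (gi x))" for c
        using kk by (simp add: mul_scal1 ee_orth_scal scal_scal)
      show ?thesis unfolding F_def s1 s2 s3 s4 s5 e1 by (auto simp: eq_commute)
    qed
    finally show ?thesis using kk by simp
  qed
  have "lin (\<lambda>(a, b, c). mul (mul (mul (mul (S a) u) (basis b)) \<beta>) (S c)) (lc G3 (W3 w) E3)
      = lc G3 (W3 w) (\<lambda>k. scal (if fst (snd k) = gi (fst k) \<and> snd (snd k) = fst k then bc (gi (fst k)) else 0) (ee (gi (fst k))))"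
    unfolding lin_lc_E3 by (rule lc_cong[OF refl]) (erule FE)
  also have "\<dots> = lc G3 (\<lambda>k. if fst (snd k) = gi (fst k) \<and> snd (snd k) = fst k then W3 w k * bc (gi (fst k)) else 0) (\<lambda>k. ee (gi (fst k)))"
    unfolding lc_def scal_def by (auto intro!: ext sum.cong)
  also have "\<dots> = lc G (\<lambda>x. W3 w (x, gi x, x) * bc (gi x)) (\<lambda>x. ee (gi x))"
    by (subst collapse2) auto
  also have "\<dots> = lc G (\<lambda>x. (\<lambda>_. 1) (gi x)) (\<lambda>x. ee (gi x))"
    by (rule lc_cong) (use W w_inv_id in \<open>auto simp: W3_def bc_def mult.commute\<close>)
  also have "\<dots> = lc G (\<lambda>_. 1) ee" by (rule lc_reindex[OF bij_gi])
  also have "\<dots> = u" by (rule ee_sum)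
  finally show ?thesis unfolding \<beta>_def .
qed

end


context qh
begin

lemma qb_base: "is_qb_base M u D e" using H by (simp add: is_hopf_def)

lemma central_phi: "central (M3 M) (lc G3 c E3)"
  by (rule central_lc) (auto simp: central_E3)

lemma central_F: "central (M2 M) (lc G2 c E2)"
  by (rule central_lc) (auto simp: central_E2)

lemma A3: "is_algebra (M3 M) (tens u (tens u u))"
  by (intro tmult_algebra A)

lemma A2: "is_algebra (M2 M) (tens u u)"
  by (intro tmult_algebra A)

lemma beta_central: "fsupp v \<Longrightarrow> mul (beta_G M u G w j) v = mul v (beta_G M u G w j)"
  using central_lc[of G ee M "\<lambda>x. w x (gi x) x"] central_ee unfolding beta_lc central_def by auto

theorem quasi_hopf:
  assumes W: "normalized_3cocycle M u G w" and LS: "lin_bij S"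
  shows "is_quasi_hopf M u D e (phi_G G w j) u (beta_G M u G w j) S"
proof -
  define \<beta> where "\<beta> = beta_G M u G w j"
  have fb: "fsupp \<beta>" unfolding \<beta>_def by simp
  have fphi': "fsupp (phi_G G w j)" unfolding phi_lc by (rule fphi)
  have qc: "bil (M3 M) (phi_G G w j) (lin (D_id D) (D h)) = bil (M3 M) (lin (id_D D) (D h)) (phi_G G w j)" for h
  proof -
    have "fsupp (lin (id_D D) (D h))" by auto
    then show ?thesis using central_phi unfolding coassoc0 phi_lc central_def by blast
  qed
  have a7: "lin (\<lambda>(a, b). mul (mul (S a) u) (basis b)) (D h) = scal (e h) u" for h
    using antip1[of h] by simp
  have a8: "lin (\<lambda>(a, b). mul (mul (basis a) \<beta>) (S b)) (D h) = scal (e h) \<beta>" for h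
  proof -
    have "lin (\<lambda>(a, b). mul (mul (basis a) \<beta>) (S b)) (D h) = lin (\<lambda>ab. mul \<beta> (mul (basis (fst ab)) (S (snd ab)))) (D h)"
      by (rule lin_cong) (use fb in \<open>auto simp: \<beta>_def beta_central[symmetric] massoc split_beta\<close>)
    also have "\<dots> = mul \<beta> (lin (\<lambda>ab. mul (basis (fst ab)) (S (snd ab))) (D h))"
      by (rule lin_lmap[OF lmap_bil2, symmetric]) auto
    also have "\<dots> = scal (e h) \<beta>" using antip2[of h] fb by (simp add: case_prod_fst_snd bil_scal2)
    finally show ?thesis .
  qed
  define \<psi> where "\<psi> = lc G3 (W3 w) E3"
  have nz: "\<And>k. k \<in> G3 \<Longrightarrow> W3 w k \<noteq> 0"
    using W by (auto simp: W3_def normalized_3cocycle_def)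
  show ?thesis
    unfolding is_quasi_hopf_def
  proof (intro conjI allI)
    show "is_qb_base M u D e" by (rule qb_base)
    show "fsupp (phi_G G w j)" by (rule fphi')
    show "fsupp u" by simp
    show "fsupp (beta_G M u G w j)" by simp
    show "lin_bij S" by (rule LS)
    show "lin S (M x y) = mul (S y) (S x)" for x y by (rule S_antimult)
    show "lin S u = u" by (rule S_unit)
    show "bil (M3 M) (phi_G G w j) (lin (D_id D) (D h)) = bil (M3 M) (lin (id_D D) (D h)) (phi_G G w j)" for h
      by (rule qc)
    show "lin (\<lambda>(a, b). mul (mul (S a) u) (basis b)) (D h) = scal (e h) u" for h by (rule a7)
    show "lin (\<lambda>(a, b). mul (mul (basis a) (beta_G M u G w j)) (S b)) (D h) = scal (e h) (beta_G M u G w j)" for h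
      using a8 unfolding \<beta>_def .
    show "lin (\<lambda>(a, b, c). scal (e b) (basis (a, c))) (phi_G G w j) = tens u u"
      by (rule counit_phi[OF W])
    show "lin (\<lambda>(a, b, c). mul (mul (mul (mul (basis a) (beta_G M u G w j)) (S b)) u) (basis c)) (phi_G G w j) = u"
      by (rule axiom_phi_beta[OF W])
    show "bil (M4 M) (bil (M4 M) (\<lambda>(p, q, r, s). u p * phi_G G w j (q, r, s)) (lin (idDid D) (phi_G G w j)))
           (\<lambda>(p, q, r, s). phi_G G w j (p, q, r) * u s)
        = bil (M4 M) (lin (iidD D) (phi_G G w j)) (lin (Diid D) (phi_G G w j))"
      by (rule pentagon[OF W])
    show "\<exists>\<psi>. fsupp \<psi> \<and> bil (M3 M) (phi_G G w j) \<psi> = tens u (tens u u) \<and> bil (M3 M) \<psi> (phi_G G w j) = tens u (tens u u)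
          \<and> lin (\<lambda>(a, b, c). mul (mul (mul (mul (S a) u) (basis b)) (beta_G M u G w j)) (S c)) \<psi> = u"
    proof (intro exI conjI)
      show "fsupp \<psi>" unfolding \<psi>_def by (rule fphi)
      show "bil (M3 M) (phi_G G w j) \<psi> = tens u (tens u u)"
        unfolding phi_lc \<psi>_def orth3 sum_E3[symmetric]
        by (rule lc_cong) (use nz in \<open>auto simp: W3_def\<close>)
      show "bil (M3 M) \<psi> (phi_G G w j) = tens u (tens u u)"
        unfolding phi_lc \<psi>_def orth3 sum_E3[symmetric]
        by (rule lc_cong) (use nz in \<open>auto simp: W3_def\<close>)
      show "lin (\<lambda>(a, b, c). mul (mul (mul (mul (S a) u) (basis b)) (beta_G M u G w j)) (S c)) \<psi> = u"
        unfolding \<psi>_def by (rule axiom_psi[OF W])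
    qed
  qed
qed

end


lemma rtens_lc2: "rtens X (lc A c V) = lc A c (\<lambda>i. rtens X (V i))"
  by (auto simp: rtens_def lc_def sum_distrib_left algebra_simps intro!: ext)

lemma sum2: "(\<Sum>k\<in>A \<times> B. f k) = (\<Sum>a\<in>A. \<Sum>b\<in>B. f (a, b))"
  by (simp add: sum.cartesian_product split_beta)

lemma collapse_fst:
  assumes "finite A" "finite B" "a0 \<in> A"
  shows "lc (A \<times> B) (\<lambda>k. if fst k = a0 then c k else 0) V = lc B (\<lambda>b. c (a0, b)) (\<lambda>b. V (a0, b))"
proof (rule ext)
  fix p
  have "lc (A \<times> B) (\<lambda>k. if fst k = a0 then c k else 0) V p
      = (\<Sum>a\<in>A. if a = a0 then (\<Sum>b\<in>B. c (a, b) * V (a, b) p) else 0)"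
    unfolding lc_def sum2 by (intro sum.cong refl) auto
  also have "\<dots> = (\<Sum>b\<in>B. c (a0, b) * V (a0, b) p)" using assms by simp
  finally show "lc (A \<times> B) (\<lambda>k. if fst k = a0 then c k else 0) V p = lc B (\<lambda>b. c (a0, b)) (\<lambda>b. V (a0, b)) p"
    unfolding lc_def .
qed

lemma collapse_snd:
  assumes "finite A" "finite B" "b0 \<in> B"
  shows "lc (A \<times> B) (\<lambda>k. if snd k = b0 then c k else 0) V = lc A (\<lambda>a. c (a, b0)) (\<lambda>a. V (a, b0))"
proof (rule ext)
  fix p
  have "lc (A \<times> B) (\<lambda>k. if snd k = b0 then c k else 0) V p
      = (\<Sum>a\<in>A. \<Sum>b\<in>B. if b = b0 then c (a, b) * V (a, b) p else 0)"
    unfolding lc_def sum2 by (intro sum.cong refl) auto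
  also have "\<dots> = (\<Sum>a\<in>A. c (a, b0) * V (a, b0) p)" using assms by simp
  finally show "lc (A \<times> B) (\<lambda>k. if snd k = b0 then c k else 0) V p = lc A (\<lambda>a. c (a, b0)) (\<lambda>a. V (a, b0)) p"
    unfolding lc_def .
qed

context qh
begin

lemma fF: "fsupp (lc G2 c E2)" by (rule fsupp_lc) auto

lemma tw1: "(\<lambda>(p, q, r). u p * lc G2 c E2 (q, r)) = lc G3 (\<lambda>k. c (snd k)) E3"
proof -
  have "(\<lambda>(p, q, r). u p * lc G2 c E2 (q, r)) = tens (lc G (\<lambda>_. 1) ee) (lc G2 c E2)"
    by (auto simp: tens_def ee_sum intro!: ext)
  also have "\<dots> = lc G3 (\<lambda>k. c (snd k)) E3"
    unfolding lc_tens by (rule lc_cong) (auto simp: E3_def)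
  finally show ?thesis .
qed

lemma tw2: "lin (id_D D) (lc G2 c E2) = lc G3 (\<lambda>k. c (fst k, mul (fst (snd k)) (snd (snd k)))) E3"
proof -
  have e: "lin (id_D D) (E2 k) = lc G (\<lambda>_. 1) (\<lambda>a. E3 (fst k, a, mul (gi a) (snd k)))" if kG: "k \<in> G2" for k
  proof -
    obtain x y where kk: "k = (x, y)" "x \<in> G" "y \<in> G" using kG by (cases k) auto
    show ?thesis unfolding kk E2_def using kk
      by (simp add: lin_id_D_tens D_ee tens_lc2 E3_def E2_def)
  qed
  have "lin (id_D D) (lc G2 c E2) = lc G2 c (\<lambda>k. lc G (\<lambda>_. 1) (\<lambda>a. E3 (fst k, a, mul (gi a) (snd k))))"
    by (subst lin_lc) (auto intro!: lc_cong simp: e)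
  also have "\<dots> = lc (G2 \<times> G) (\<lambda>ka. c (fst ka) * 1) (\<lambda>ka. E3 (fst (fst ka), snd ka, mul (gi (snd ka)) (snd (fst ka))))"
    by (rule lc_nested_prod)
  also have "\<dots> = lc G3 (\<lambda>k. c (fst k, mul (fst (snd k)) (snd (snd k)))) E3"
    by (rule trans[OF lc_cong lc_reindex_witness[where i="\<lambda>k. ((fst k, mul (fst (snd k)) (snd (snd k))), fst (snd k))"]])
       (auto simp: massoc[symmetric])
  finally show ?thesis .
qed

lemma tw4: "lin (D_id D) (lc G2 c E2) = lc G3 (\<lambda>k. c (mul (fst k) (fst (snd k)), snd (snd k))) E3"
proof -
  have e: "lin (D_id D) (E2 k) = lc G (\<lambda>_. 1) (\<lambda>a. E3 (a, mul (gi a) (fst k), snd k))" if kG: "k \<in> G2" for k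
  proof -
    obtain x y where kk: "k = (x, y)" "x \<in> G" "y \<in> G" using kG by (cases k) auto
    show ?thesis unfolding kk E2_def using kk
      by (simp add: lin_D_id_tens D_ee rtens_lc1 E3_def E2_def rtens_tens)
  qed
  have "lin (D_id D) (lc G2 c E2) = lc G2 c (\<lambda>k. lc G (\<lambda>_. 1) (\<lambda>a. E3 (a, mul (gi a) (fst k), snd k)))"
    by (subst lin_lc) (auto intro!: lc_cong simp: e)
  also have "\<dots> = lc (G2 \<times> G) (\<lambda>ka. c (fst ka) * 1) (\<lambda>ka. E3 (snd ka, mul (gi (snd ka)) (fst (fst ka)), snd (fst ka)))"
    by (rule lc_nested_prod)
  also have "\<dots> = lc G3 (\<lambda>k. c (mul (fst k) (fst (snd k)), snd (snd k))) E3"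
    by (rule trans[OF lc_cong lc_reindex_witness[where i="\<lambda>k. ((mul (fst k) (fst (snd k)), snd (snd k)), fst k)"]])
       (auto simp: massoc[symmetric])
  finally show ?thesis .
qed

lemma tw5: "(\<lambda>(p, q, r). lc G2 c E2 (p, q) * u r) = lc G3 (\<lambda>k. c (fst k, fst (snd k))) E3"
proof -
  have "(\<lambda>(p, q, r). lc G2 c E2 (p, q) * u r) = rtens (lc G2 c E2) (lc G (\<lambda>_. 1) ee)"
    by (simp add: rtens_def ee_sum)
  also have "\<dots> = lc G2 c (\<lambda>k. lc G (\<lambda>_. 1) (\<lambda>z. E3 (fst k, snd k, z)))"
    unfolding rtens_lc1 by (rule lc_cong[OF refl]) (auto simp: rtens_lc2 E2_def E3_def rtens_tens)
  also have "\<dots> = lc (G2 \<times> G) (\<lambda>ka. c (fst ka) * 1) (\<lambda>ka. E3 (fst (fst ka), snd (fst ka), snd ka))"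
    by (rule lc_nested_prod)
  also have "\<dots> = lc G3 (\<lambda>k. c (fst k, fst (snd k))) E3"
    by (rule trans[OF lc_cong lc_reindex_witness[where i="\<lambda>k. ((fst k, fst (snd k)), snd (snd k))"]])
       auto
  finally show ?thesis .
qed

lemma counitF1: "lin (\<lambda>(a, b). scal (e a) (basis b)) (lc G2 c E2) = lc G (\<lambda>y. c (u, y)) ee"
proof -
  have e: "lin (\<lambda>(a, b). scal (e a) (basis b)) (E2 k) = scal (if fst k = u then 1 else 0) (ee (snd k))" if kG: "k \<in> G2" for k
  proof -
    obtain x y where kk: "k = (x, y)" "x \<in> G" "y \<in> G" using kG by (cases k) auto
    show ?thesis unfolding kk E2_def using kk
      by (simp add: lin_tens lin_scal_basis lin_scal_const eps_ee)
  qed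
  have "lin (\<lambda>(a, b). scal (e a) (basis b)) (lc G2 c E2) = lc G2 c (\<lambda>k. scal (if fst k = u then 1 else 0) (ee (snd k)))"
    by (subst lin_lc) (auto intro!: lc_cong simp: e)
  also have "\<dots> = lc G2 (\<lambda>k. if fst k = u then c k else 0) (\<lambda>k. ee (snd k))"
    unfolding lc_def scal_def by (auto intro!: ext sum.cong)
  also have "\<dots> = lc G (\<lambda>y. c (u, y)) ee"
    by (subst collapse_fst) auto
  finally show ?thesis .
qed

lemma lin_scal_const2: "fsupp v \<Longrightarrow> lin (\<lambda>a. scal c (basis a)) v = scal c v"
  by (rule lin_scal_basis)

lemma counitF2: "lin (\<lambda>(a, b). scal (e b) (basis a)) (lc G2 c E2) = lc G (\<lambda>x. c (x, u)) ee"
proof -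
  have e: "lin (\<lambda>(a, b). scal (e b) (basis a)) (E2 k) = scal (if snd k = u then 1 else 0) (ee (fst k))" if kG: "k \<in> G2" for k
  proof -
    obtain x y where kk: "k = (x, y)" "x \<in> G" "y \<in> G" using kG by (cases k) auto
    have "lin (\<lambda>(a, b). scal (e b) (basis a)) (tens (ee x) (ee y)) = lin (\<lambda>a. scal (linf e (ee y)) (basis a)) (ee x)"
      by (simp add: lin_tens lin_scal_const)
    also have "\<dots> = scal (linf e (ee y)) (ee x)" by (simp add: lin_scal_basis)
    finally show ?thesis unfolding kk E2_def using kk by (simp add: eps_ee)
  qed
  have "lin (\<lambda>(a, b). scal (e b) (basis a)) (lc G2 c E2) = lc G2 c (\<lambda>k. scal (if snd k = u then 1 else 0) (ee (fst k)))"
    by (subst lin_lc) (auto intro!: lc_cong simp: e)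
  also have "\<dots> = lc G2 (\<lambda>k. if snd k = u then c k else 0) (\<lambda>k. ee (fst k))"
    unfolding lc_def scal_def by (auto intro!: ext sum.cong)
  also have "\<dots> = lc G (\<lambda>x. c (x, u)) ee"
    by (subst collapse_snd) auto
  finally show ?thesis .
qed

lemma maptens_basis2: "maptens basis basis = basis"
  by (auto simp: maptens_def intro!: ext)

lemma maptens_basis3: "maptens basis (maptens basis basis) = basis"
  by (auto simp: maptens_def intro!: ext)

lemma lin_bij_basis: "lin_bij basis"
  unfolding lin_bij_def
proof (intro conjI allI)
  show "fsupp (basis x)" for x by simp
  show "bij_betw (lin basis) {v. fsupp v} {v. fsupp v}"
    unfolding bij_betw_def inj_on_def image_def
    by (auto simp: lin_basis_id)
qed

theorem gauge:
  assumes W: "normalized_3cocycle M u G w" and W': "normalized_3cocycle M u G w'"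
    and C: "cohomologous M G w w'"
  shows "gauge_equiv M u D e (phi_G G w j) D e (phi_G G w' j)"
proof -
  obtain f where fnz: "\<And>x y. x \<in> G \<Longrightarrow> y \<in> G \<Longrightarrow> f x y \<noteq> 0"
    and fw: "\<And>x y z. x \<in> G \<Longrightarrow> y \<in> G \<Longrightarrow> z \<in> G \<Longrightarrow>
        w' x y z = w x y z * (f y z * f x (mul y z)) / (f (mul x y) z * f x y)"
    using C unfolding cohomologous_def by blast
  have wn: "\<And>x y z. x \<in> G \<Longrightarrow> y \<in> G \<Longrightarrow> z \<in> G \<Longrightarrow> w x y z \<noteq> 0"
    using W by (simp add: normalized_3cocycle_def)
  have wn': "\<And>x y z. x \<in> G \<Longrightarrow> y \<in> G \<Longrightarrow> z \<in> G \<Longrightarrow> w' x y z \<noteq> 0"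
    using W' by (simp add: normalized_3cocycle_def)
  define c0 where "c0 = f u u"
  have c0nz: "c0 \<noteq> 0" using fnz by (simp add: c0_def)
  have fu1: "f u y = c0" if y: "y \<in> G" for y
  proof -
    have "w' u u y = w u u y * (f u y * f u (mul u y)) / (f (mul u u) y * f u u)" using fw y by simp
    moreover have "w u u y = 1" "w' u u y = 1" using W W' y by (simp_all add: normalized_3cocycle_def)
    ultimately have "1 = f u y * f u y / (f u y * f u u)" using y by simp
    moreover have "f u y \<noteq> 0" "f u u \<noteq> 0" using fnz y by auto
    ultimately show ?thesis by (simp add: c0_def field_simps)
  qed
  have fu2: "f x u = c0" if x: "x \<in> G" for x
  proof -
    have "w' x u u = w x u u * (f u u * f x (mul u u)) / (f (mul x u) u * f x u)" using fw x by simp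
    moreover have "w x u u = 1" "w' x u u = 1" using W W' x by (simp_all add: normalized_3cocycle_def)
    ultimately have "1 = f u u * f x u / (f x u * f x u)" using x by simp
    moreover have "f x u \<noteq> 0" "f u u \<noteq> 0" using fnz x by auto
    ultimately show ?thesis by (simp add: c0_def field_simps)
  qed
  define f' where "f' k = f (fst k) (snd k) / c0" for k
  have f'nz: "k \<in> G2 \<Longrightarrow> f' k \<noteq> 0" for k using fnz c0nz by (auto simp: f'_def)
  define F where "F = lc G2 f' E2"
  define Fi where "Fi = lc G2 (\<lambda>k. inverse (f' k)) E2"
  have fF1: "fsupp F" and fF2: "fsupp Fi" unfolding F_def Fi_def by (rule fF)+
  have FFi: "bil (M2 M) F Fi = tens u u" "bil (M2 M) Fi F = tens u u"
    unfolding F_def Fi_def orth2 sum_E2[symmetric]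
    by (rule lc_cong, use f'nz in auto)+
  have gt: "gauge_transf M u e F Fi"
    unfolding gauge_transf_def
  proof (intro conjI)
    show "fsupp F" "fsupp Fi" by (rule fF1, rule fF2)
    show "bil (M2 M) F Fi = tens u u" "bil (M2 M) Fi F = tens u u" by (rule FFi)+
    show "lin (\<lambda>(a, b). scal (e a) (basis b)) F = u"
      unfolding F_def counitF1
      by (rule trans[OF lc_cong ee_sum]) (use fu1 c0nz in \<open>auto simp: f'_def\<close>)
    show "lin (\<lambda>(a, b). scal (e b) (basis a)) F = u"
      unfolding F_def counitF2
      by (rule trans[OF lc_cong ee_sum]) (use fu2 c0nz in \<open>auto simp: f'_def\<close>)
  qed
  have tD: "lin (maptens basis basis) (D h) = lin (twist_D M D F Fi) (basis h)" for h
  proof -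
    have "lin (twist_D M D F Fi) (basis h) = bil (M2 M) (bil (M2 M) F (D h)) Fi"
      by (simp add: twist_D_def)
    also have "\<dots> = bil (M2 M) (bil (M2 M) (D h) F) Fi"
      using central_F unfolding F_def central_def by simp
    also have "\<dots> = bil (M2 M) (D h) (bil (M2 M) F Fi)"
      using fF1 fF2 by (simp add: alg_assoc[OF A2])
    also have "\<dots> = D h" using FFi by (simp add: alg_unit_r[OF A2])
    finally show ?thesis by (simp add: maptens_basis2 lin_basis_id)
  qed
  have tphi: "lin (maptens basis (maptens basis basis)) (phi_G G w j) = twist_phi M u D (phi_G G w' j) F Fi"
  proof -
    have "twist_phi M u D (phi_G G w' j) F Fi
       = lc G3 (\<lambda>k. f' (snd k) * f' (fst k, mul (fst (snd k)) (snd (snd k))) * W3 (\<lambda>x y z. inverse (w' x y z)) k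
            * inverse (f' (mul (fst k) (fst (snd k)), snd (snd k))) * inverse (f' (fst k, fst (snd k)))) E3"
      unfolding twist_phi_def F_def Fi_def tw1 tw2 tw4 tw5 phi_lc orth3 ..
    also have "\<dots> = lc G3 (W3 (\<lambda>x y z. inverse (w x y z))) E3"
    proof (rule lc_cong[OF _ refl])
      fix k assume k: "k \<in> G3"
      obtain x y z where kk: "k = (x, y, z)" "x \<in> G" "y \<in> G" "z \<in> G" using k by (cases k) auto
      have nz: "f y z \<noteq> 0" "f x (mul y z) \<noteq> 0" "f (mul x y) z \<noteq> 0" "f x y \<noteq> 0" "w x y z \<noteq> 0"
        using kk fnz wn by auto
      show "f' (snd k) * f' (fst k, mul (fst (snd k)) (snd (snd k))) * W3 (\<lambda>x y z. inverse (w' x y z)) k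
            * inverse (f' (mul (fst k) (fst (snd k)), snd (snd k))) * inverse (f' (fst k, fst (snd k)))
          = W3 (\<lambda>x y z. inverse (w x y z)) k"
        unfolding kk W3_def f'_def using kk nz c0nz by (simp add: fw field_simps)
    qed
    also have "\<dots> = lin (maptens basis (maptens basis basis)) (phi_G G w j)"
      by (simp add: maptens_basis3 lin_basis_id fphi phi_lc)
    finally show ?thesis ..
  qed
  show ?thesis
    unfolding gauge_equiv_def
  proof (intro exI conjI allI)
    show "gauge_transf M u e F Fi" by (rule gt)
    show "lin_bij basis" by (rule lin_bij_basis)
    show "lin basis (M x y) = bil M (basis x) (basis y)" for x y by (simp add: lin_basis_id)
    show "lin basis u = u" by (simp add: lin_basis_id)
    show "lin (maptens basis basis) (D h) = lin (twist_D M D F Fi) (basis h)" for h by (rule tD)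
    show "linf e (basis h) = e h" for h by simp
    show "lin (maptens basis (maptens basis basis)) (phi_G G w j) = twist_phi M u D (phi_G G w' j) F Fi"
      by (rule tphi)
  qed
qed

end


theorem mainTheorem8:
  fixes M :: "'b \<Rightarrow> 'b \<Rightarrow> 'b vec" and u :: "'b vec"
    and D :: "'b \<Rightarrow> ('b \<times> 'b) vec" and e :: "'b \<Rightarrow> complex" and S :: "'b \<Rightarrow> 'b vec"
    and G :: "'b vec set"
    and w :: "'b vec \<Rightarrow> 'b vec \<Rightarrow> 'b vec \<Rightarrow> complex"
    and j :: "'b vec \<Rightarrow> 'b vec \<Rightarrow> complex"
  assumes "is_hopf M u D e S"
    and "lin_bij S"
    and "finite_central_subgroup M u D G"
    and "normalized_3cocycle M u G w"
    and "char_iso M G j"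
  shows "is_quasi_hopf M u D e (phi_G G w j) u (beta_G M u G w j) S
    \<and> (\<forall>w'. normalized_3cocycle M u G w' \<and> cohomologous M G w w' \<longrightarrow>
          gauge_equiv M u D e (phi_G G w j) D e (phi_G G w' j))"
proof -
  interpret qh M u D e S G j
    by (unfold_locales) (use assms in auto)
  show ?thesis
    using quasi_hopf[OF assms(4,2)] gauge[OF assms(4)] by blast
qed


end
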